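(* Let $\varrho\in C^{0,\varsigma}(\Gamma)$, $\varsigma\in(\frac12,1)$, with $\varrho(\pm1)=0$. Then $\varrho/\mathrm w\in C^{0,\varsigma-1/2}(\Gamma)$ and there is a constant $C_2$ (independent of $\tau_1,\tau_2$) such that for all distinct $\tau_1,\tau_2\in\Gamma$, $$\Big|\frac{\varrho(\tau_1)}{\mathrm w(\tau_1)}-\frac{\varrho(\tau_2)}{\mathrm w(\tau_2)}\Big|\le C_2\min\Big\{\frac1{|1-\tau_1^2|^{1/2}},\frac1{|1-\tau_2^2|^{1/2}}\Big\}|\tau_1-\tau_2|^{\varsigma}.$$
   Context: $\Delta$ is a closed analytic Jordan arc with endpoints $\pm1$, oriented from $-1$ to $1$. $\Gamma$ is an infinitely smooth Jordan curve containing $\Delta$ whose interior domain $\Omega$ lies to the left of $\Delta$. $\mathrm w(z)=\sqrt{z^2-1}$ is holomorphic in $\overline{\mathbb C}\setminus\Delta$ with $\mathrm w(z)/z\to1$ at $\infty$; on $\Gamma$, $\mathrm w$ denotes its boundary values from within $\Omega$. $C^{0,\upsilon}(\Gamma)$ is the space of uniformly $\upsilon$-Hölder continuous functions on $\Gamma$. *)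

theory Defs
  imports "HOL-Complex_Analysis.Complex_Analysis"
begin

definition holder_on :: "real \<Rightarrow> complex set \<Rightarrow> (complex \<Rightarrow> complex) \<Rightarrow> bool" where
  "holder_on u S f \<longleftrightarrow> (\<exists>C. \<forall>x\<in>S. \<forall>y\<in>S. norm (f x - f y) \<le> C * dist x y powr u)"

text \<open>An infinitely smooth (regular) Jordan curve, parametrised 1-periodically by g on the reals,
  injective on one period; its trace is  path_image g = g ` {0..1}.\<close>
definition smooth_jordan_param :: "(real \<Rightarrow> complex) \<Rightarrow> bool" where
  "smooth_jordan_param g \<longleftrightarrow>
     (\<forall>t. g (t + 1) = g t) \<and> inj_on g {0..<1} \<and>
     (\<exists>D :: nat \<Rightarrow> real \<Rightarrow> complex. D 0 = g \<and>
        (\<forall>n t. (D n has_vector_derivative D (Suc n) t) (at t)) \<and> (\<forall>t. D 1 t \<noteq> 0))"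

definition analytic_arc :: "(complex \<Rightarrow> complex) \<Rightarrow> bool" where
  "analytic_arc F \<longleftrightarrow>
     (\<exists>U. open U \<and> complex_of_real ` {0..1} \<subseteq> U \<and> F holomorphic_on U \<and>
          inj_on F (complex_of_real ` {0..1}) \<and>
          (\<forall>t\<in>{0..1}. deriv F (complex_of_real t) \<noteq> 0))"

definition arc_image :: "(complex \<Rightarrow> complex) \<Rightarrow> complex set" where
  "arc_image F = F ` (complex_of_real ` {0..1})"

end

theory Submission
  imports Defs
begin
locale setting =
  fixes F :: "complex \<Rightarrow> complex" and g :: "real \<Rightarrow> complex"
    and w wb \<rho> :: "complex \<Rightarrow> complex" and \<sigma> :: real
  assumes arc: "analytic_arc F"
    and arc_ends: "F 0 = -1" "F 1 = 1"
    and curve: "smooth_jordan_param g"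
    and contains: "arc_image F \<subseteq> path_image g"
    and left: "\<forall>t\<in>{0<..<1}. \<forall>\<^sub>F e in at_right (0::real).
                 F (complex_of_real t) + complex_of_real e * \<i> * deriv F (complex_of_real t)
                   \<in> inside (path_image g)"
    and w_hol: "w holomorphic_on (- arc_image F)"
    and w_sq: "\<forall>z\<in>- arc_image F. (w z)\<^sup>2 = z\<^sup>2 - 1"
    and wb: "\<forall>\<tau>\<in>path_image g. (w \<longlongrightarrow> wb \<tau>) (at \<tau> within inside (path_image g))"
    and sig: "1/2 < \<sigma>" "\<sigma> < 1"
    and rho_holder: "holder_on \<sigma> (path_image g) \<rho>"
    and rho_ends: "\<rho> 1 = 0" "\<rho> (-1) = 0"
begin

lemma g_per_nat: "g (t + real n) = g t"
proof (induction n arbitrary: t)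
  case 0 then show ?case by simp
next
  case (Suc n)
  have "g (t + real (Suc n)) = g ((t + real n) + 1)" by (simp add: algebra_simps)
  also have "\<dots> = g (t + real n)" using curve unfolding smooth_jordan_param_def by blast
  finally show ?case using Suc by simp
qed

lemma g_per_int: "g (t + real_of_int k) = g t"
proof (cases "k \<ge> 0")
  case True
  then show ?thesis using g_per_nat[of t "nat k"] by simp
next
  case False
  have "g (t + real_of_int k) = g ((t + real_of_int k) + real (nat (-k)))"
    using g_per_nat by simp
  also have "\<dots> = g t" using False by simp
  finally show ?thesis .
qed

lemma g_frac: "g t = g (frac t)"
  using g_per_int[of "frac t" "\<lfloor>t\<rfloor>"] by (simp add: frac_def)

lemma g_inj_mod: assumes "g s = g s'" shows "\<exists>k::int. s' = s + k"
proof -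
  have "inj_on g {0..<1}" using curve unfolding smooth_jordan_param_def by blast
  moreover have "frac s \<in> {0..<1}" "frac s' \<in> {0..<1}" by (auto simp: frac_lt_1)
  moreover have "g (frac s) = g (frac s')" using assms g_frac by metis
  ultimately have "frac s = frac s'" by (meson inj_on_eq_iff)
  then have "s' = s + (\<lfloor>s'\<rfloor> - \<lfloor>s\<rfloor>)" by (simp add: frac_def)
  then show ?thesis by (metis of_int_diff)
qed

lemma g_inj_close: assumes "g s = g s'" "\<bar>s - s'\<bar> < 1" shows "s = s'"
proof -
  obtain k::int where k: "s' = s + k" using g_inj_mod assms(1) by blast
  then have "\<bar>real_of_int k\<bar> < 1" using assms(2) by simp
  then have "k = 0" by linarith
  then show ?thesis using k by simp
qed

definition "Dg = (SOME D :: nat \<Rightarrow> real \<Rightarrow> complex. D 0 = g \<and>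
        (\<forall>n t. (D n has_vector_derivative D (Suc n) t) (at t)) \<and> (\<forall>t. D 1 t \<noteq> 0))"

lemma Dg: "Dg 0 = g" "\<And>n t. (Dg n has_vector_derivative Dg (Suc n) t) (at t)" "\<And>t. Dg 1 t \<noteq> 0"
proof -
  have "\<exists>D :: nat \<Rightarrow> real \<Rightarrow> complex. D 0 = g \<and>
        (\<forall>n t. (D n has_vector_derivative D (Suc n) t) (at t)) \<and> (\<forall>t. D 1 t \<noteq> 0)"
    using curve unfolding smooth_jordan_param_def by blast
  then have "Dg 0 = g \<and> (\<forall>n t. (Dg n has_vector_derivative Dg (Suc n) t) (at t)) \<and> (\<forall>t. Dg 1 t \<noteq> 0)"
    unfolding Dg_def by (rule someI_ex)
  then show "Dg 0 = g" "\<And>n t. (Dg n has_vector_derivative Dg (Suc n) t) (at t)" "\<And>t. Dg 1 t \<noteq> 0"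
    by auto
qed

definition "g' = Dg 1"

lemma g_deriv: "(g has_vector_derivative g' t) (at t)"
  using Dg(2)[of 0 t] Dg(1) by (simp add: g'_def)

lemma g'_nz: "g' t \<noteq> 0" using Dg(3) by (simp add: g'_def)

lemma g'_cont: "continuous_on S g'"
proof -
  have "\<And>t. isCont (Dg 1) t"
    using Dg(2)[of 1] by (meson has_vector_derivative_continuous)
  then show ?thesis unfolding g'_def by (simp add: continuous_at_imp_continuous_on)
qed

lemma g_cont: "continuous_on S g"
  using g_deriv by (meson continuous_at_imp_continuous_on has_vector_derivative_continuous)

lemma g_image: "path_image g = g ` {a..a+1}"
proof
  show "path_image g \<subseteq> g ` {a..a+1}"
  proof
    fix z assume "z \<in> path_image g"
    then obtain s where s: "s \<in> {0..1}" "z = g s" by (auto simp: path_image_def)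
    define k where "k = \<lceil>a - s\<rceil>"
    have "s + k \<in> {a..a+1}" unfolding k_def by (auto, linarith+)
    moreover have "g (s + k) = z" using g_per_int s by simp
    ultimately show "z \<in> g ` {a..a+1}" by force
  qed
next
  show "g ` {a..a+1} \<subseteq> path_image g"
  proof
    fix z assume "z \<in> g ` {a..a+1}"
    then obtain s where "z = g s" by auto
    then have "z = g (frac s)" using g_frac by simp
    moreover have "frac s \<in> {0..1}" by (simp add: frac_lt_1 less_imp_le)
    ultimately show "z \<in> path_image g" by (auto simp: path_image_def)
  qed
qed

lemma simple_g: "simple_path g" "pathfinish g = pathstart g"
proof -
  show "pathfinish g = pathstart g"
    using g_per_nat[of 0 1] by (simp add: pathfinish_def pathstart_def)
  have "path g" using g_cont by (simp add: path_def)
  moreover have "loop_free g"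
    unfolding loop_free_def
  proof (intro ballI impI)
    fix x y assume xy: "x \<in> {0..1}" "y \<in> {0..1}" "g x = g y"
    obtain k :: int where k: "y = x + k" using g_inj_mod xy(3) by blast
    then have "\<bar>real_of_int k\<bar> \<le> 1" using xy by auto
    then have "k = 0 \<or> k = 1 \<or> k = -1" by linarith
    then show "x = y \<or> x = 0 \<and> y = 1 \<or> x = 1 \<and> y = 0" using k xy by auto
  qed
  ultimately show "simple_path g" by (simp add: simple_path_def)
qed

abbreviation "\<Gamma> \<equiv> path_image g"
abbreviation "\<Delta> \<equiv> arc_image F"
abbreviation "\<Omega> \<equiv> inside (path_image g)"

lemma jordan: "open \<Omega>" "frontier \<Omega> = \<Gamma>" "\<Omega> \<inter> \<Gamma> = {}"
proof -
  have J: "open \<Omega> \<and> frontier \<Omega> = \<Gamma>"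
    using Jordan_inside_outside[OF simple_g] by blast
  then show "open \<Omega>" "frontier \<Omega> = \<Gamma>" by auto
  show "\<Omega> \<inter> \<Gamma> = {}" by (rule inside_no_overlap)
qed

lemma Gamma_closure: assumes "\<tau> \<in> \<Gamma>" shows "\<tau> islimpt \<Omega>"
proof -
  have "\<tau> \<in> closure \<Omega>" using assms jordan(2) unfolding frontier_def by blast
  moreover have "\<tau> \<notin> \<Omega>" using assms jordan(3) by blast
  ultimately show ?thesis by (simp add: closure_def)
qed

lemma compact_Gamma: "compact \<Gamma>"
  by (simp add: compact_path_image path_def g_cont)

lemma wb_sq: assumes "\<tau> \<in> \<Gamma>" shows "(wb \<tau>)\<^sup>2 = \<tau>\<^sup>2 - 1"
proof -
  have nt: "at \<tau> within \<Omega> \<noteq> bot" using Gamma_closure[OF assms]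
    by (simp add: trivial_limit_within)
  have "((\<lambda>z. (w z)\<^sup>2) \<longlongrightarrow> (wb \<tau>)\<^sup>2) (at \<tau> within \<Omega>)"
    using wb assms by (auto intro!: tendsto_intros)
  moreover have "\<forall>\<^sub>F z in at \<tau> within \<Omega>. (w z)\<^sup>2 = z\<^sup>2 - 1"
  proof -
    have "\<Omega> \<subseteq> - \<Delta>" using jordan(3) contains by blast
    then have "\<forall>x. x \<noteq> \<tau> \<longrightarrow> x \<in> \<Omega> \<longrightarrow> (w x)\<^sup>2 = x\<^sup>2 - 1" using w_sq by blast
    then show ?thesis by (simp add: eventually_at_filter)
  qed
  ultimately have "((\<lambda>z. z\<^sup>2 - 1) \<longlongrightarrow> (wb \<tau>)\<^sup>2) (at \<tau> within \<Omega>)"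
    by (rule Lim_transform_eventually)
  moreover have "((\<lambda>z. z\<^sup>2 - 1) \<longlongrightarrow> \<tau>\<^sup>2 - 1) (at \<tau> within \<Omega>)"
    by (auto intro!: tendsto_eq_intros)
  ultimately show ?thesis using nt tendsto_unique by blast
qed

end

lemma compact_sep:
  fixes f :: "'a::metric_space \<Rightarrow> 'b::heine_borel"
  assumes "compact K" "continuous_on K f" "x0 \<in> K" "\<And>x. x \<in> K \<Longrightarrow> f x = f x0 \<Longrightarrow> x = x0" "\<epsilon> > 0"
  shows "\<exists>\<delta>>0. \<forall>x\<in>K. dist (f x) (f x0) < \<delta> \<longrightarrow> dist x x0 < \<epsilon>"
proof -
  define K' where "K' = K \<inter> {x. \<epsilon> \<le> dist x x0}"
  have "closed {x. \<epsilon> \<le> dist x x0}"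
    by (intro closed_Collect_le continuous_intros)
  then have "compact K'" unfolding K'_def using assms(1) by (simp add: compact_Int_closed)
  moreover have "continuous_on K' f" using assms(2) continuous_on_subset unfolding K'_def by blast
  ultimately have "compact (f ` K')" using compact_continuous_image by blast
  then have cl: "closed (f ` K')" by (rule compact_imp_closed)
  have nin: "f x0 \<notin> f ` K'"
  proof
    assume "f x0 \<in> f ` K'"
    then obtain x where "x \<in> K'" "f x = f x0" by auto
    then show False using assms(4,5) unfolding K'_def by force
  qed
  obtain \<delta> where d: "\<delta> > 0" "\<forall>y\<in>f ` K'. \<delta> \<le> dist (f x0) y"
    using separate_point_closed[OF cl nin] by blast
  show ?thesis
  proof (intro exI conjI ballI impI)
    fix x assume x: "x \<in> K" "dist (f x) (f x0) < \<delta>"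
    show "dist x x0 < \<epsilon>"
    proof (rule ccontr)
      assume "\<not> dist x x0 < \<epsilon>"
      then have "x \<in> K'" using x unfolding K'_def by auto
      then have "\<delta> \<le> dist (f x0) (f x)" using d by auto
      then show False using x by (simp add: dist_commute)
    qed
  qed (rule d(1))
qed

context setting begin

definition "Fr t = F (complex_of_real t)"

lemma arc_ex: "\<exists>U. open U \<and> complex_of_real ` {0..1} \<subseteq> U \<and> F holomorphic_on U \<and>
   inj_on F (complex_of_real ` {0..1}) \<and> (\<forall>t\<in>{0..1}. deriv F (complex_of_real t) \<noteq> 0)"
  using arc unfolding analytic_arc_def by blast

lemma Fr_cont: "continuous_on {0..1} Fr"
proof -
  obtain U where U: "open U" "complex_of_real ` {0..1} \<subseteq> U" "F holomorphic_on U" using arc_ex by blast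
  have cU: "continuous_on U F" using U(3) by (rule holomorphic_on_imp_continuous_on)
  have cr: "continuous_on {0..1} (\<lambda>x. complex_of_real x)" by (intro continuous_intros)
  show ?thesis unfolding Fr_def by (rule continuous_on_compose2[OF cU cr U(2)])
qed

lemma Fr_inj: "inj_on Fr {0..1}"
proof -
  have "inj_on F (complex_of_real ` {0..1})" using arc_ex by blast
  then show ?thesis unfolding Fr_def inj_on_def by auto
qed

lemma Delta_Fr: "\<Delta> = Fr ` {0..1}"
  unfolding arc_image_def Fr_def by auto

lemma Fr_ends: "Fr 0 = -1" "Fr 1 = 1" using arc_ends by (auto simp: Fr_def)

lemma arc_local:
  assumes t0: "t0 \<in> {0<..<1}"
  shows "\<exists>r>0. \<Gamma> \<inter> ball (Fr t0) r \<subseteq> \<Delta>"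
proof -
  define \<tau>0 where "\<tau>0 = Fr t0"
  have "\<tau>0 \<in> \<Gamma>" using contains t0 Delta_Fr unfolding \<tau>0_def by auto
  then obtain s0 where s0: "s0 \<in> {0..1}" "g s0 = \<tau>0" by (auto simp: path_image_def)
  define K where "K = {s0 - 1/2 .. s0 + 1/2}"
  define K' where "K' = {s0 - 1/4 .. s0 + 1/4}"
  have gK: "\<Gamma> = g ` K"
  proof -
    have "s0 - 1/2 + 1 = s0 + 1/2" by simp
    then show ?thesis unfolding K_def using g_image[of "s0 - 1/2"] by metis
  qed
  have s0K: "s0 \<in> K" "s0 \<in> K'" unfolding K_def K'_def by auto
  have uK: "s = s0" if "s \<in> K" "g s = g s0" for s
  proof -
    have "\<bar>s - s0\<bar> < 1" using that(1) unfolding K_def by auto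
    then show "s = s0" using g_inj_close that(2) by blast
  qed
  obtain \<delta>1 where d1: "\<delta>1 > 0" "\<forall>s\<in>K. dist (g s) (g s0) < \<delta>1 \<longrightarrow> dist s s0 < 1/4"
    using compact_sep[of K g s0 "1/4"] uK g_cont s0K unfolding K_def by auto
  have "continuous (at t0 within {0..1}) Fr"
    using Fr_cont t0 by (simp add: continuous_on_eq_continuous_within)
  then obtain \<eta>0 where e0: "\<eta>0 > 0" "\<forall>t\<in>{0..1}. dist t t0 < \<eta>0 \<longrightarrow> dist (Fr t) (Fr t0) < \<delta>1"
    using d1(1) unfolding continuous_within_eps_delta by blast
  define \<eta> where "\<eta> = min (\<eta>0/2) (min (t0/2) ((1-t0)/2))"
  have "\<eta> \<le> \<eta>0/2" "\<eta> \<le> t0/2" "\<eta> \<le> (1-t0)/2" unfolding \<eta>_def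
    by (meson min.cobounded1 min.cobounded2 order_trans)+
  moreover have "\<eta> > 0" using e0 t0 unfolding \<eta>_def by simp
  ultimately have eta: "\<eta> > 0" "\<eta> < \<eta>0" "0 < t0 - \<eta>" "t0 + \<eta> < 1" using e0 t0 by auto
  define I where "I = {t0 - \<eta> .. t0 + \<eta>}"
  have I01: "I \<subseteq> {0..1}" using eta unfolding I_def by auto
  have ex: "\<exists>s\<in>K'. g s = Fr t" if "t \<in> I" for t
  proof -
    have "Fr t \<in> \<Gamma>" using that I01 contains Delta_Fr by auto
    then obtain s where s: "s \<in> K" "g s = Fr t" using gK by auto
    have "dist t t0 < \<eta>0" using that eta unfolding I_def dist_real_def by auto
    then have "dist (Fr t) (Fr t0) < \<delta>1" using e0 that I01 by auto
    then have "dist s s0 < 1/4" using d1 s s0 unfolding \<tau>0_def by auto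
    then have "s \<in> K'" unfolding K'_def dist_real_def atLeastAtMost_iff by arith
    then show ?thesis using s by blast
  qed
  have uK': "s = s'" if "s \<in> K'" "s' \<in> K'" "g s = g s'" for s s'
    using g_inj_close[OF that(3)] that(1,2) unfolding K'_def by auto
  define \<psi> where "\<psi> t = (SOME s. s \<in> K' \<and> g s = Fr t)" for t
  have psi: "\<psi> t \<in> K'" "g (\<psi> t) = Fr t" if "t \<in> I" for t
    using someI_ex[of "\<lambda>s. s \<in> K' \<and> g s = Fr t"] ex[OF that] unfolding \<psi>_def by auto
  have psi0: "\<psi> t0 = s0"
    using psi[of t0] eta s0K uK' s0 unfolding I_def \<tau>0_def by auto
  have psi_cont: "continuous_on I \<psi>"
    unfolding continuous_on_iff
  proof (intro ballI allI impI)
    fix t1 e assume t1: "t1 \<in> I" and e: "(0::real) < e"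
    have cK': "compact K'" unfolding K'_def by simp
    obtain \<delta>2 where d2: "\<delta>2 > 0" "\<forall>s\<in>K'. dist (g s) (g (\<psi> t1)) < \<delta>2 \<longrightarrow> dist s (\<psi> t1) < e"
      using compact_sep[OF cK' g_cont psi(1)[OF t1] _ e] uK' psi(1)[OF t1] by blast
    have "continuous (at t1 within I) Fr"
      using Fr_cont t1 I01 continuous_on_subset by (metis continuous_on_eq_continuous_within)
    then obtain d where d: "d > 0" "\<forall>t\<in>I. dist t t1 < d \<longrightarrow> dist (Fr t) (Fr t1) < \<delta>2"
      using d2(1) unfolding continuous_within_eps_delta by blast
    show "\<exists>d>0. \<forall>t\<in>I. dist t t1 < d \<longrightarrow> dist (\<psi> t) (\<psi> t1) < e"
    proof (intro exI conjI ballI impI)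
      fix t assume "t \<in> I" "dist t t1 < d"
      then have "dist (g (\<psi> t)) (g (\<psi> t1)) < \<delta>2" using d psi t1 by auto
      then show "dist (\<psi> t) (\<psi> t1) < e" using d2 psi(1)[OF \<open>t \<in> I\<close>] by auto
    qed (rule d(1))
  qed
  have psi_inj: "inj_on \<psi> I"
  proof (rule inj_onI)
    fix x y assume "x \<in> I" "y \<in> I" "\<psi> x = \<psi> y"
    then have "Fr x = Fr y" using psi by metis
    then show "x = y" using Fr_inj \<open>x \<in> I\<close> \<open>y \<in> I\<close> I01 by (meson inj_on_eq_iff subsetD)
  qed
  have mono: "(\<psi> (t0-\<eta>) < s0 \<and> s0 < \<psi> (t0+\<eta>)) \<or> (\<psi> (t0+\<eta>) < s0 \<and> s0 < \<psi> (t0-\<eta>))"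
    using continuous_inj_imp_mono[of "t0-\<eta>" t0 "t0+\<eta>" \<psi>] psi_cont psi_inj eta psi0
    unfolding I_def by simp
  define \<kappa> where "\<kappa> = min \<bar>\<psi> (t0-\<eta>) - s0\<bar> \<bar>\<psi> (t0+\<eta>) - s0\<bar>"
  have kappa: "\<kappa> > 0" using mono unfolding \<kappa>_def by auto
  have k1: "\<kappa> \<le> \<bar>\<psi> (t0-\<eta>) - s0\<bar>" "\<kappa> \<le> \<bar>\<psi> (t0+\<eta>) - s0\<bar>"
    unfolding \<kappa>_def by simp_all
  have pc: "continuous_on {t0-\<eta>..t0+\<eta>} \<psi>" using psi_cont unfolding I_def .
  have ab: "t0-\<eta> \<le> t0+\<eta>" using eta by simp
  have inD: "g s \<in> \<Delta>" if "\<bar>s - s0\<bar> < \<kappa>" for s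
  proof -
    have "\<exists>t. t0-\<eta> \<le> t \<and> t \<le> t0+\<eta> \<and> \<psi> t = s"
      using mono
    proof
      assume m: "\<psi> (t0-\<eta>) < s0 \<and> s0 < \<psi> (t0+\<eta>)"
      show ?thesis
      proof (rule IVT'[OF _ _ ab pc])
        show "\<psi> (t0-\<eta>) \<le> s" using m that k1 by arith
        show "s \<le> \<psi> (t0+\<eta>)" using m that k1 by arith
      qed
    next
      assume m: "\<psi> (t0+\<eta>) < s0 \<and> s0 < \<psi> (t0-\<eta>)"
      show ?thesis
      proof (rule IVT2'[OF _ _ ab pc])
        show "\<psi> (t0+\<eta>) \<le> s" using m that k1 by arith
        show "s \<le> \<psi> (t0-\<eta>)" using m that k1 by arith
      qed
    qed
    then obtain t where t: "t \<in> I" "\<psi> t = s" unfolding I_def by auto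
    then have "g s = Fr t" using psi by metis
    then show ?thesis using t I01 Delta_Fr by auto
  qed
  have cK: "compact K" unfolding K_def by simp
  obtain \<delta>3 where d3: "\<delta>3 > 0" "\<forall>s\<in>K. dist (g s) (g s0) < \<delta>3 \<longrightarrow> dist s s0 < \<kappa>"
    using compact_sep[OF cK g_cont s0K(1) uK kappa] by blast
  show ?thesis
  proof (intro exI conjI subsetI)
    fix \<tau> assume "\<tau> \<in> \<Gamma> \<inter> ball (Fr t0) \<delta>3"
    then obtain s where s: "s \<in> K" "\<tau> = g s" "dist (g s) (g s0) < \<delta>3"
    proof -
      have "\<tau> \<in> g ` K" "dist \<tau> (g s0) < \<delta>3" using gK s0 \<open>\<tau> \<in> \<Gamma> \<inter> ball (Fr t0) \<delta>3\<close> unfolding \<tau>0_def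
        by (auto simp: dist_commute)
      then show ?thesis using that by blast
    qed
    then have "\<bar>s - s0\<bar> < \<kappa>" using d3 by (auto simp: dist_real_def)
    then show "\<tau> \<in> \<Delta>" using inD s by auto
  qed (rule d3(1))
qed

end

context setting begin

lemma Delta_compact: "compact \<Delta>"
  using Delta_Fr Fr_cont compact_continuous_image by (metis compact_Icc)

lemma open_nD: "open (- \<Delta>)"
  using Delta_compact compact_imp_closed by blast

lemma w_deriv: assumes "z \<notin> \<Delta>" shows "deriv w z * w z = z"
proof -
  have zin: "z \<in> - \<Delta>" using assms by simp
  have d1: "(w has_field_derivative deriv w z) (at z)"
    using holomorphic_derivI[OF w_hol open_nD zin] .
  have d2: "((\<lambda>x. w x * w x) has_field_derivative (deriv w z * w z + deriv w z * w z)) (at z)"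
    using DERIV_mult[OF d1 d1] .
  have d3: "((\<lambda>x. x * x - 1) has_field_derivative (1 * z + 1 * z)) (at z)"
    using DERIV_diff[OF DERIV_mult[OF DERIV_ident DERIV_ident] DERIV_const[of 1]] by (simp only: diff_zero)
  have d4: "((\<lambda>x. w x * w x) has_field_derivative (1 * z + 1 * z)) (at z)"
  proof (rule has_field_derivative_transform_within_open[OF d3 open_nD zin])
    fix x assume "x \<in> - \<Delta>"
    then show "x * x - 1 = w x * w x" using w_sq by (simp add: power2_eq_square)
  qed
  have "deriv w z * w z + deriv w z * w z = 1 * z + 1 * z" using DERIV_unique[OF d2 d4] .
  then show ?thesis by (simp add: mult.commute)
qed

lemma Fr_not_ends: assumes "t \<in> {0<..<1}" shows "Fr t \<noteq> 1" "Fr t \<noteq> -1"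
proof -
  have "t \<in> {0..1}" "(0::real) \<in> {0..1}" "(1::real) \<in> {0..1}" "t \<noteq> 0" "t \<noteq> 1" using assms by auto
  then show "Fr t \<noteq> 1" "Fr t \<noteq> -1" using Fr_inj Fr_ends by (metis inj_on_eq_iff)+
qed

end

context setting begin

lemma wb_lip:
  assumes t0: "t0 \<in> {0<..<1}"
  shows "\<exists>\<eta>>0. \<exists>B. \<forall>t1 t2. \<bar>t1-t0\<bar> < \<eta> \<longrightarrow> \<bar>t2-t0\<bar> < \<eta> \<longrightarrow>
           norm (wb (Fr t1) - wb (Fr t2)) \<le> B * \<bar>t1-t2\<bar>"
proof -
  obtain U where U: "open U" "complex_of_real ` {0..1} \<subseteq> U" "F holomorphic_on U"
    "inj_on F (complex_of_real ` {0..1})" "\<forall>t\<in>{0..1}. deriv F (complex_of_real t) \<noteq> 0"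
    using arc_ex by blast
  define c0 where "c0 = complex_of_real t0"
  define \<tau>0 where "\<tau>0 = Fr t0"
  have Fc0: "F c0 = \<tau>0" unfolding c0_def \<tau>0_def Fr_def ..
  have t01: "t0 \<in> {0..1}" using t0 by auto
  have c0U: "c0 \<in> U" using U(2) t01 unfolding c0_def by auto
  have dF0: "deriv F c0 \<noteq> 0" using U(5) t01 unfolding c0_def by auto
  obtain r1 where r1: "r1 > 0" "ball c0 r1 \<subseteq> U" "inj_on F (ball c0 r1)"
    using has_complex_derivative_locally_injective[OF U(3) c0U U(1) dF0] by blast
  define S where "S = ball c0 r1"
  have holS: "F holomorphic_on S" using U(3) r1(2) holomorphic_on_subset unfolding S_def by blast
  have oS: "open S" unfolding S_def by simp
  have injS: "inj_on F S" using r1 unfolding S_def by simp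
  obtain \<Phi> where \<Phi>: "\<Phi> holomorphic_on (F ` S)" "\<And>z. z \<in> S \<Longrightarrow> deriv F z * deriv \<Phi> (F z) = 1"
      "\<And>z. z \<in> S \<Longrightarrow> \<Phi> (F z) = z"
    using holomorphic_has_inverse[OF holS oS injS] by blast
  have oFS: "open (F ` S)" using open_mapping_thm3[OF holS oS injS] .
  have tau0: "\<tau>0 \<noteq> 1" "\<tau>0 \<noteq> -1" using Fr_not_ends[OF t0] unfolding \<tau>0_def by auto
  define m0 where "m0 = norm (\<tau>0^2 - 1)"
  have m0: "m0 > 0"
  proof -
    have "\<tau>0^2 - 1 = (\<tau>0 - 1) * (\<tau>0 + 1)" by (simp add: algebra_simps power2_eq_square)
    moreover have "\<tau>0 - 1 \<noteq> 0" using tau0 by simp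
    moreover have "\<tau>0 + 1 \<noteq> 0" using tau0 by (metis add_eq_0_iff equation_minus_iff)
    ultimately show ?thesis unfolding m0_def by simp
  qed
  obtain \<delta>4 where d4: "\<delta>4 > 0" "\<forall>t\<in>{0..1}. dist (Fr t) (Fr t0) < \<delta>4 \<longrightarrow> dist t t0 < r1"
  proof -
    have "\<And>x. x \<in> {0..1} \<Longrightarrow> Fr x = Fr t0 \<Longrightarrow> x = t0" using Fr_inj t01 by (meson inj_on_eq_iff)
    then show ?thesis using compact_sep[of "{0..1}" Fr t0 r1] Fr_cont t01 r1(1) that by auto
  qed
  define \<rho> where "\<rho> = min 1 (m0 / (2 * (2 * norm \<tau>0 + 1)))"
  have \<rho>: "\<rho> > 0" "\<rho> \<le> 1" "\<rho> * (2 * norm \<tau>0 + 1) \<le> m0 / 2"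
  proof -
    have p: "2 * norm \<tau>0 + 1 > 0" using norm_ge_zero[of \<tau>0] by linarith
    show "\<rho> > 0" "\<rho> \<le> 1" unfolding \<rho>_def using m0 p by auto
    have "\<rho> \<le> m0 / (2 * (2 * norm \<tau>0 + 1))" unfolding \<rho>_def by simp
    then have "\<rho> * (2 * norm \<tau>0 + 1) \<le> m0 / (2 * (2 * norm \<tau>0 + 1)) * (2 * norm \<tau>0 + 1)"
      by (rule mult_right_mono) (use p in auto)
    also have "\<dots> = m0 / 2" using p by (simp add: field_simps)
    finally show "\<rho> * (2 * norm \<tau>0 + 1) \<le> m0 / 2" .
  qed
  have near: "norm (z^2 - 1) \<ge> m0/2 \<and> norm z \<le> norm \<tau>0 + 1" if "dist z \<tau>0 < \<rho>" for z
  proof -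
    have dz: "norm (z - \<tau>0) < \<rho>" using that by (simp add: dist_norm)
    then have nz: "norm z \<le> norm \<tau>0 + 1" using \<rho>(2) norm_triangle_ineq2[of z \<tau>0] by linarith
    have "norm (z + \<tau>0) \<le> 2 * norm \<tau>0 + 1" using nz norm_triangle_ineq[of z \<tau>0] by linarith
    have "norm (z^2 - \<tau>0^2) = norm (z - \<tau>0) * norm (z + \<tau>0)"
      by (simp add: power2_eq_square algebra_simps norm_mult[symmetric])
    also have "\<dots> \<le> \<rho> * (2 * norm \<tau>0 + 1)"
      using dz \<open>norm (z + \<tau>0) \<le> 2 * norm \<tau>0 + 1\<close> \<rho>(1) by (intro mult_mono) auto
    finally have "norm (z^2 - \<tau>0^2) \<le> m0/2" using \<rho>(3) by linarith
    moreover have "m0 \<le> norm (z^2 - 1) + norm (z^2 - \<tau>0^2)"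
      unfolding m0_def using norm_triangle_ineq4[of "z^2 - 1" "z^2 - \<tau>0^2"] by simp
    ultimately show ?thesis using nz by linarith
  qed
  have cF: "isCont F c0"
    using holomorphic_on_imp_continuous_on[OF U(3)] c0U U(1) continuous_on_eq_continuous_at by blast
  have cdF: "isCont (deriv F) c0"
    using holomorphic_on_imp_continuous_on[OF holomorphic_deriv[OF U(3) U(1)]] c0U U(1)
      continuous_on_eq_continuous_at by blast
  obtain e1 where e1: "e1 > 0" "\<forall>\<zeta>. dist \<zeta> c0 < e1 \<longrightarrow> dist (F \<zeta>) (F c0) < min \<delta>4 \<rho>"
  proof -
    have "min \<delta>4 \<rho> > 0" using \<rho>(1) d4(1) by simp
    then show ?thesis using cF[unfolded continuous_at_eps_delta, rule_format, of "min \<delta>4 \<rho>"] that by blast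
  qed
  obtain e2 where e2: "e2 > 0" "\<forall>\<zeta>. dist \<zeta> c0 < e2 \<longrightarrow> dist (deriv F \<zeta>) (deriv F c0) < 1"
    using cdF[unfolded continuous_at_eps_delta, rule_format, of 1] that by auto
  define r2 where "r2 = min r1 (min e1 e2)"
  have r2: "r2 > 0" "r2 \<le> r1" "r2 \<le> e1" "r2 \<le> e2" unfolding r2_def using r1 e1 e2 by auto
  define H where "H = ball c0 r2 \<inter> {\<zeta>. Im \<zeta> > 0}"
  have cvxH: "convex H" unfolding H_def by (intro convex_Int convex_ball convex_halfspace_Im_gt)
  have HS: "H \<subseteq> S" unfolding H_def S_def using r2 by auto
  have FnD: "F \<zeta> \<notin> \<Delta>" if "\<zeta> \<in> H" for \<zeta>
  proof
    assume "F \<zeta> \<in> \<Delta>"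
    then obtain t where t: "t \<in> {0..1}" "F \<zeta> = Fr t" using Delta_Fr by auto
    have "dist \<zeta> c0 < e1" using that r2 unfolding H_def by (auto simp: dist_commute)
    then have "dist (Fr t) (Fr t0) < \<delta>4" using e1 t Fc0 unfolding \<tau>0_def by auto
    then have "dist t t0 < r1" using d4 t by auto
    then have ctS: "complex_of_real t \<in> S" unfolding S_def c0_def by (simp add: dist_commute dist_of_real)
    have "F \<zeta> = F (complex_of_real t)" using t unfolding Fr_def by simp
    then have "\<zeta> = complex_of_real t" using injS ctS HS that by (meson inj_on_eq_iff subsetD)
    then show False using that unfolding H_def by simp
  qed
  define B where "B = (norm \<tau>0 + 1) / sqrt (m0/2) * (norm (deriv F c0) + 1)"
  have HU: "H \<subseteq> U" using HS r1(2) unfolding S_def by auto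
  have Gder: "((\<lambda>\<zeta>. w (F \<zeta>)) has_field_derivative (deriv w (F \<zeta>) * deriv F \<zeta>)) (at \<zeta> within H)"
    if "\<zeta> \<in> H" for \<zeta>
  proof -
    have "F \<zeta> \<in> - \<Delta>" using FnD that by simp
    then have "(w has_field_derivative deriv w (F \<zeta>)) (at (F \<zeta>))"
      using holomorphic_derivI[OF w_hol open_nD] by blast
    moreover have "(F has_field_derivative deriv F \<zeta>) (at \<zeta> within H)"
      using holomorphic_derivI[OF U(3) U(1)] that HU by blast
    ultimately show ?thesis by (rule DERIV_chain2)
  qed
  have Gbd: "norm (deriv w (F \<zeta>) * deriv F \<zeta>) \<le> B" if "\<zeta> \<in> H" for \<zeta>
  proof -
    have dz: "dist \<zeta> c0 < r2" using that unfolding H_def by (auto simp: dist_commute)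
    then have "dist \<zeta> c0 < e1" using r2 by linarith
    then have "dist (F \<zeta>) (F c0) < min \<delta>4 \<rho>" using e1(2) by blast
    then have "dist (F \<zeta>) \<tau>0 < \<rho>" using Fc0 by simp
    then have nr: "norm ((F \<zeta>)^2 - 1) \<ge> m0/2" "norm (F \<zeta>) \<le> norm \<tau>0 + 1" using near by auto
    have Fin: "F \<zeta> \<in> - \<Delta>" using FnD that by simp
    have "(w (F \<zeta>))^2 = (F \<zeta>)^2 - 1" using w_sq Fin by blast
    then have "norm ((w (F \<zeta>))^2) = norm ((F \<zeta>)^2 - 1)" by simp
    then have "(norm (w (F \<zeta>)))^2 = norm ((F \<zeta>)^2 - 1)" by (simp add: norm_power)
    then have "(norm (w (F \<zeta>)))^2 \<ge> m0/2" using nr by simp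
    then have wl: "norm (w (F \<zeta>)) \<ge> sqrt (m0/2)" by (simp add: real_le_lsqrt)
    have sp: "sqrt (m0/2) > 0" using m0 by simp
    have "deriv w (F \<zeta>) * w (F \<zeta>) = F \<zeta>" using w_deriv FnD that by blast
    then have "norm (deriv w (F \<zeta>) * w (F \<zeta>)) = norm (F \<zeta>)" by simp
    then have e: "norm (deriv w (F \<zeta>)) * norm (w (F \<zeta>)) = norm (F \<zeta>)" by (simp add: norm_mult)
    have "norm (deriv w (F \<zeta>)) * sqrt (m0/2) \<le> norm (deriv w (F \<zeta>)) * norm (w (F \<zeta>))"
      by (rule mult_left_mono[OF wl norm_ge_zero])
    then have "norm (deriv w (F \<zeta>)) * sqrt (m0/2) \<le> norm \<tau>0 + 1"
      using e nr(2) by linarith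
    then have dw: "norm (deriv w (F \<zeta>)) \<le> (norm \<tau>0 + 1) / sqrt (m0/2)"
      using sp by (simp add: pos_le_divide_eq)
    have "dist (deriv F \<zeta>) (deriv F c0) < 1" using e2 r2 dz by auto
    then have dF: "norm (deriv F \<zeta>) \<le> norm (deriv F c0) + 1"
      using norm_triangle_ineq2[of "deriv F \<zeta>" "deriv F c0"] by (simp add: dist_norm)
    have "norm (deriv w (F \<zeta>) * deriv F \<zeta>) = norm (deriv w (F \<zeta>)) * norm (deriv F \<zeta>)"
      by (simp add: norm_mult)
    also have "\<dots> \<le> (norm \<tau>0 + 1) / sqrt (m0/2) * (norm (deriv F c0) + 1)"
      using dw dF order_trans[OF norm_ge_zero dw] by (intro mult_mono) auto
    finally show ?thesis unfolding B_def .
  qed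
  have Glip: "norm (w (F a) - w (F b)) \<le> B * norm (a - b)" if "a \<in> H" "b \<in> H" for a b
    using field_differentiable_bound[OF cvxH Gder Gbd that] .
  have appr: "\<exists>\<zeta>. (\<zeta> \<longlongrightarrow> complex_of_real t) (at_right (0::real)) \<and> (\<forall>\<^sub>F e in at_right (0::real). \<zeta> e \<in> H) \<and>
      ((\<lambda>e. w (F (\<zeta> e))) \<longlongrightarrow> wb (Fr t)) (at_right (0::real))"
    if t: "t \<in> {0<..<1}" "dist (complex_of_real t) c0 < r2" for t
  proof -
    define ct where "ct = complex_of_real t"
    define D' where "D' = deriv F ct"
    have D'nz: "D' \<noteq> 0" using U(5) t(1) unfolding D'_def ct_def by auto
    have ctS: "ct \<in> S" using t(2) r2 unfolding S_def ct_def by (auto simp: dist_commute)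
    have Frt: "Fr t = F ct" unfolding Fr_def ct_def ..
    define z where "z e = F ct + complex_of_real e * \<i> * D'" for e :: real
    define \<zeta> where "\<zeta> e = \<Phi> (z e)" for e :: real
    have zlim: "(z \<longlongrightarrow> F ct) (at_right (0::real))"
    proof -
      have "((\<lambda>e::real. complex_of_real e) \<longlongrightarrow> complex_of_real 0) (at_right (0::real))"
        by (intro tendsto_intros)
      then have "((\<lambda>e::real. F ct + complex_of_real e * \<i> * D') \<longlongrightarrow> F ct + complex_of_real 0 * \<i> * D') (at_right (0::real))"
        by (intro tendsto_intros)
      then show ?thesis unfolding z_def by simp
    qed
    have epos: "\<forall>\<^sub>F e in at_right (0::real). 0 < e" by (rule eventually_at_right_less)
    have zne: "\<forall>\<^sub>F e in at_right (0::real). z e \<noteq> F ct"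
      using epos by eventually_elim (use D'nz in \<open>simp add: z_def\<close>)
    have zin: "\<forall>\<^sub>F e in at_right (0::real). z e \<in> \<Omega>"
      using left t(1) unfolding z_def D'_def ct_def by blast
    have zat: "filterlim z (at (F ct) within \<Omega>) (at_right (0::real))"
      unfolding filterlim_at using zlim eventually_conj[OF zin zne] by blast
    have "Fr t \<in> Fr ` {0..1}" using t(1) by auto
    then have FtG: "F ct \<in> \<Gamma>" using contains Delta_Fr Frt by auto
    have wz: "((\<lambda>e. w (z e)) \<longlongrightarrow> wb (F ct)) (at_right (0::real))"
      using filterlim_compose[OF wb[rule_format, OF FtG] zat] .
    have FctS: "F ct \<in> F ` S" using ctS by blast
    have zFS: "\<forall>\<^sub>F e in at_right (0::real). z e \<in> F ` S"
      using topological_tendstoD[OF zlim oFS FctS] .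
    have Fz: "\<forall>\<^sub>F e in at_right (0::real). F (\<zeta> e) = z e"
      using zFS by eventually_elim (use \<Phi>(3) in \<open>auto simp: \<zeta>_def\<close>)
    have \<Phi>cont: "isCont \<Phi> (F ct)"
      using holomorphic_on_imp_continuous_on[OF \<Phi>(1)] oFS FctS continuous_on_eq_continuous_at by blast
    have \<Phi>ct: "\<Phi> (F ct) = ct" using \<Phi>(3) ctS by blast
    have \<zeta>lim: "(\<zeta> \<longlongrightarrow> ct) (at_right (0::real))"
      using isCont_tendsto_compose[OF \<Phi>cont zlim] \<Phi>ct unfolding \<zeta>_def by simp
    have ctb: "ct \<in> ball c0 r2" using t(2) unfolding ct_def by (simp add: dist_commute)
    have \<zeta>ball: "\<forall>\<^sub>F e in at_right (0::real). \<zeta> e \<in> ball c0 r2"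
      using topological_tendstoD[OF \<zeta>lim open_ball ctb] .
    have \<Phi>der: "(\<Phi> has_field_derivative deriv \<Phi> (F ct)) (at (F ct))"
      using holomorphic_derivI[OF \<Phi>(1) oFS FctS] .
    have dd: "D' * deriv \<Phi> (F ct) = 1" using \<Phi>(2)[OF ctS] unfolding D'_def .
    have q1: "((\<lambda>y. (\<Phi> y - \<Phi> (F ct)) / (y - F ct)) \<longlongrightarrow> deriv \<Phi> (F ct)) (at (F ct))"
      using \<Phi>der has_field_derivative_iff by blast
    have zat2: "filterlim z (at (F ct)) (at_right (0::real))"
      using filterlim_atI[OF zlim zne] .
    have q2: "((\<lambda>e. (\<zeta> e - ct) / (z e - F ct)) \<longlongrightarrow> deriv \<Phi> (F ct)) (at_right (0::real))"
      using filterlim_compose[OF q1 zat2] \<Phi>ct unfolding \<zeta>_def by simp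
    have q3: "((\<lambda>e. (\<zeta> e - ct) / (z e - F ct) * (\<i> * D')) \<longlongrightarrow> deriv \<Phi> (F ct) * (\<i> * D')) (at_right (0::real))"
      by (intro tendsto_intros q2)
    have val: "deriv \<Phi> (F ct) * (\<i> * D') = \<i>" using dd by (simp add: algebra_simps)
    have q4: "((\<lambda>e. Im ((\<zeta> e - ct) / (z e - F ct) * (\<i> * D'))) \<longlongrightarrow> 1) (at_right (0::real))"
      using tendsto_Im[OF q3] val by simp
    have q5: "\<forall>\<^sub>F e in at_right (0::real). 0 < Im ((\<zeta> e - ct) / (z e - F ct) * (\<i> * D'))"
      using order_tendstoD(1)[OF q4, of 0] by simp
    have imp: "\<forall>\<^sub>F e in at_right (0::real). Im (\<zeta> e) > 0"
      using q5 epos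
    proof eventually_elim
      case (elim e)
      have "z e - F ct = complex_of_real e * (\<i> * D')" unfolding z_def by simp
      then have "(\<zeta> e - ct) / (z e - F ct) * (\<i> * D') = (\<zeta> e - ct) / complex_of_real e"
        using D'nz elim(2) by (simp add: field_simps)
      then have "0 < Im ((\<zeta> e - ct) / complex_of_real e)" using elim(1) by simp
      then have "0 < Im (\<zeta> e - ct) / e" by (simp add: Im_divide_of_real)
      then have "0 < Im (\<zeta> e - ct)" using elim(2) by (simp add: zero_less_divide_iff)
      then show ?case unfolding ct_def by simp
    qed
    have inH: "\<forall>\<^sub>F e in at_right (0::real). \<zeta> e \<in> H"
      using imp \<zeta>ball by eventually_elim (simp add: H_def)
    have wlim: "((\<lambda>e. w (F (\<zeta> e))) \<longlongrightarrow> wb (Fr t)) (at_right (0::real))"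
    proof -
      have "\<forall>\<^sub>F e in at_right (0::real). w (z e) = w (F (\<zeta> e))"
        using Fz by eventually_elim simp
      then show ?thesis using Lim_transform_eventually[OF wz] Frt by simp
    qed
    show ?thesis using \<zeta>lim inH wlim unfolding ct_def by blast
  qed
  define \<eta> where "\<eta> = min r2 (min t0 (1-t0))"
  have eta: "\<eta> > 0" "\<eta> \<le> r2" "\<eta> \<le> t0" "\<eta> \<le> 1 - t0" unfolding \<eta>_def using r2 t0 by auto
  show ?thesis
  proof (intro exI conjI allI impI)
    fix t1 t2 assume h1: "\<bar>t1-t0\<bar> < \<eta>" and h2: "\<bar>t2-t0\<bar> < \<eta>"
    have "t1 \<in> {0<..<1}" "dist (complex_of_real t1) c0 < r2"
      using h1 eta unfolding c0_def by (auto simp: dist_of_real dist_real_def)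
    then obtain \<zeta>1 where z1: "(\<zeta>1 \<longlongrightarrow> complex_of_real t1) (at_right (0::real))" "\<forall>\<^sub>F e in at_right (0::real). \<zeta>1 e \<in> H"
      "((\<lambda>e. w (F (\<zeta>1 e))) \<longlongrightarrow> wb (Fr t1)) (at_right (0::real))" using appr by blast
    have "t2 \<in> {0<..<1}" "dist (complex_of_real t2) c0 < r2"
      using h2 eta unfolding c0_def by (auto simp: dist_of_real dist_real_def)
    then obtain \<zeta>2 where z2: "(\<zeta>2 \<longlongrightarrow> complex_of_real t2) (at_right (0::real))" "\<forall>\<^sub>F e in at_right (0::real). \<zeta>2 e \<in> H"
      "((\<lambda>e. w (F (\<zeta>2 e))) \<longlongrightarrow> wb (Fr t2)) (at_right (0::real))" using appr by blast
    have l1: "((\<lambda>e. norm (w (F (\<zeta>1 e)) - w (F (\<zeta>2 e)))) \<longlongrightarrow> norm (wb (Fr t1) - wb (Fr t2))) (at_right (0::real))"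
      by (intro tendsto_intros z1(3) z2(3))
    have l2: "((\<lambda>e. B * norm (\<zeta>1 e - \<zeta>2 e)) \<longlongrightarrow> B * norm (complex_of_real t1 - complex_of_real t2)) (at_right (0::real))"
      by (intro tendsto_intros z1(1) z2(1))
    have ev: "\<forall>\<^sub>F e in at_right (0::real). norm (w (F (\<zeta>1 e)) - w (F (\<zeta>2 e))) \<le> B * norm (\<zeta>1 e - \<zeta>2 e)"
      using z1(2) z2(2) by eventually_elim (rule Glip)
    have "norm (wb (Fr t1) - wb (Fr t2)) \<le> B * norm (complex_of_real t1 - complex_of_real t2)"
      using tendsto_le[OF trivial_limit_at_right_real l2 l1 ev] .
    then show "norm (wb (Fr t1) - wb (Fr t2)) \<le> B * \<bar>t1-t2\<bar>"
    proof -
      have "norm (complex_of_real t1 - complex_of_real t2) = \<bar>t1 - t2\<bar>"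
        by (simp only: of_real_diff[symmetric] norm_of_real)
      then show ?thesis using \<open>norm (wb (Fr t1) - wb (Fr t2)) \<le> B * norm (complex_of_real t1 - complex_of_real t2)\<close>
        by simp
    qed
  qed (rule eta(1))
qed

end

context setting begin

lemma wb_eq_w: assumes "\<tau> \<in> \<Gamma>" "\<tau> \<notin> \<Delta>" shows "wb \<tau> = w \<tau>"
proof -
  have nt: "at \<tau> within \<Omega> \<noteq> bot" using Gamma_closure[OF assms(1)]
    by (simp add: trivial_limit_within)
  have "isCont w \<tau>"
    using holomorphic_on_imp_continuous_on[OF w_hol] open_nD assms(2) continuous_on_eq_continuous_at
    by blast
  then have "continuous (at \<tau> within \<Omega>) w" by (rule continuous_at_imp_continuous_within)
  then have "(w \<longlongrightarrow> w \<tau>) (at \<tau> within \<Omega>)" unfolding continuous_within .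
  moreover have "(w \<longlongrightarrow> wb \<tau>) (at \<tau> within \<Omega>)" using wb assms(1) by blast
  ultimately show ?thesis using tendsto_unique[OF nt] by blast
qed

lemma wb_cont: "continuous_on (\<Gamma> - {1, -1}) wb"
  unfolding continuous_on_eq_continuous_within
proof
  fix \<tau>0 assume t0S: "\<tau>0 \<in> \<Gamma> - {1, -1}"
  show "continuous (at \<tau>0 within (\<Gamma> - {1, -1})) wb"
  proof (cases "\<tau>0 \<in> \<Delta>")
    case False
    obtain d where d: "d > 0" "ball \<tau>0 d \<subseteq> - \<Delta>"
      using open_contains_ball[of "- \<Delta>"] open_nD False by blast
    have "isCont w \<tau>0"
      using holomorphic_on_imp_continuous_on[OF w_hol] open_nD False continuous_on_eq_continuous_at
      by blast
    then have cw: "continuous (at \<tau>0 within (\<Gamma> - {1, -1})) w"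
      by (simp add: continuous_at_imp_continuous_within)
    show ?thesis
    proof (rule continuous_transform_within[OF cw d(1) t0S])
      fix x assume "x \<in> \<Gamma> - {1, -1}" "dist x \<tau>0 < d"
      then have "x \<notin> \<Delta>" "x \<in> \<Gamma>" using d(2) by (auto simp: dist_commute)
      then show "w x = wb x" using wb_eq_w by simp
    qed
  next
    case True
    then obtain t0 where t0: "t0 \<in> {0..1}" "\<tau>0 = Fr t0" using Delta_Fr by auto
    have "t0 \<noteq> 0" "t0 \<noteq> 1" using t0S t0 Fr_ends by auto
    then have t0': "t0 \<in> {0<..<1}" using t0 by auto
    obtain r where r: "r > 0" "\<Gamma> \<inter> ball (Fr t0) r \<subseteq> \<Delta>" using arc_local[OF t0'] by blast
    obtain \<eta> B where eB: "\<eta> > 0" "\<forall>t1 t2. \<bar>t1-t0\<bar> < \<eta> \<longrightarrow> \<bar>t2-t0\<bar> < \<eta> \<longrightarrow>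
           norm (wb (Fr t1) - wb (Fr t2)) \<le> B * \<bar>t1-t2\<bar>" using wb_lip[OF t0'] by blast
    have uq: "\<And>x. x \<in> {0..1} \<Longrightarrow> Fr x = Fr t0 \<Longrightarrow> x = t0" using Fr_inj t0 by (meson inj_on_eq_iff)
    show ?thesis
      unfolding continuous_within_eps_delta
    proof (intro allI impI)
      fix e :: real assume e: "e > 0"
      define \<epsilon> where "\<epsilon> = min \<eta> (e / (\<bar>B\<bar> + 1))"
      have ep: "\<epsilon> > 0" "\<epsilon> \<le> \<eta>" "\<epsilon> \<le> e / (\<bar>B\<bar> + 1)" unfolding \<epsilon>_def using eB(1) e by auto
      obtain \<delta> where d: "\<delta> > 0" "\<forall>t\<in>{0..1}. dist (Fr t) (Fr t0) < \<delta> \<longrightarrow> dist t t0 < \<epsilon>"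
        using compact_sep[of "{0..1}" Fr t0 \<epsilon>] Fr_cont t0(1) uq ep(1) by auto
      show "\<exists>d>0. \<forall>x'\<in>\<Gamma> - {1, -1}. dist x' \<tau>0 < d \<longrightarrow> dist (wb x') (wb \<tau>0) < e"
      proof (intro exI conjI ballI impI)
        show "min r \<delta> > 0" using r d by simp
        fix x assume x: "x \<in> \<Gamma> - {1, -1}" "dist x \<tau>0 < min r \<delta>"
        then have "x \<in> \<Gamma> \<inter> ball (Fr t0) r" using t0 by (auto simp: dist_commute)
        then have "x \<in> \<Delta>" using r by blast
        then obtain t where t: "t \<in> {0..1}" "x = Fr t" using Delta_Fr by auto
        then have "dist t t0 < \<epsilon>" using d x t0 by auto
        then have tt: "\<bar>t - t0\<bar> < \<epsilon>" by (simp add: dist_real_def)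
        then have "norm (wb (Fr t) - wb (Fr t0)) \<le> B * \<bar>t - t0\<bar>" using eB(2) ep by auto
        also have "\<dots> \<le> \<bar>B\<bar> * \<bar>t - t0\<bar>" by (rule mult_right_mono) auto
        also have "\<dots> \<le> \<bar>B\<bar> * \<epsilon>" by (rule mult_left_mono) (use tt in auto)
        also have "\<dots> \<le> \<bar>B\<bar> * (e / (\<bar>B\<bar> + 1))" by (rule mult_left_mono) (use ep in auto)
        also have "\<dots> < e"
        proof -
          have "\<bar>B\<bar> * (e / (\<bar>B\<bar> + 1)) = e * (\<bar>B\<bar> / (\<bar>B\<bar> + 1))" by simp
          also have "\<dots> < e * 1" using e by (intro mult_strict_left_mono) auto
          finally show ?thesis by simp
        qed
        finally show "dist (wb x) (wb \<tau>0) < e" using t t0 by (simp add: dist_norm)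
      qed
    qed
  qed
qed

end

lemma vd_bound:
  fixes f :: "real \<Rightarrow> 'a::real_normed_vector"
  assumes "convex S" "\<And>x. x \<in> S \<Longrightarrow> (f has_vector_derivative f' x) (at x)"
    "\<And>x. x \<in> S \<Longrightarrow> norm (f' x) \<le> B" "x \<in> S" "y \<in> S"
  shows "norm (f x - f y) \<le> B * \<bar>x - y\<bar>"
proof -
  have "norm (f x - f y) \<le> B * norm (x - y)"
  proof (rule differentiable_bound[OF assms(1) _ _ assms(4,5)])
    fix z assume "z \<in> S"
    then show "(f has_derivative (\<lambda>h. h *\<^sub>R f' z)) (at z within S)"
      using assms(2) unfolding has_vector_derivative_def by (blast intro: has_derivative_at_withinI)
    show "onorm (\<lambda>h. h *\<^sub>R f' z) \<le> B"
    proof (rule onorm_le)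
      fix h :: real
      have "norm (h *\<^sub>R f' z) = norm (f' z) * norm h" by simp
      also have "\<dots> \<le> B * norm h" using assms(3)[OF \<open>z \<in> S\<close>] by (simp add: mult_right_mono)
      finally show "norm (h *\<^sub>R f' z) \<le> B * norm h" .
    qed
  qed
  then show ?thesis by simp
qed

context setting begin

lemma g_isCont: "isCont g t"
  using g_deriv by (rule has_vector_derivative_continuous)

lemma g_lip: "\<exists>L>0. \<forall>s\<in>{-1..2}. \<forall>s'\<in>{-1..2}. norm (g s - g s') \<le> L * \<bar>s - s'\<bar>"
proof -
  have "compact (g' ` {-1..2})" by (rule compact_continuous_image[OF g'_cont]) simp
  then obtain L0 where L0: "\<forall>x\<in>g' ` {-1..2}. norm x \<le> L0" using compact_imp_bounded bounded_iff by metis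
  define L where "L = max L0 1"
  have "norm (g s - g s') \<le> L * \<bar>s - s'\<bar>" if "s \<in> {-1..2}" "s' \<in> {-1..2}" for s s'
  proof (rule vd_bound[of "{-1..2}" g g' L s s'])
    show "\<And>x. (g has_vector_derivative g' x) (at x)" by (rule g_deriv)
    show "\<And>x. x \<in> {-1..2} \<Longrightarrow> norm (g' x) \<le> L" using L0 unfolding L_def by force
  qed (use that in auto)
  moreover have "L > 0" unfolding L_def by simp
  ultimately show ?thesis by blast
qed

lemma chord_lower: "\<exists>c>0. \<forall>s1 s2. s1 \<in> {0..1} \<longrightarrow> \<bar>s1 - s2\<bar> \<le> 1/2 \<longrightarrow> c * \<bar>s1 - s2\<bar> \<le> norm (g s1 - g s2)"
proof (rule ccontr)
  assume "\<not> ?thesis"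
  then have H: "\<forall>c>0. \<exists>s1 s2. s1 \<in> {0..1} \<and> \<bar>s1 - s2\<bar> \<le> 1/2 \<and> norm (g s1 - g s2) < c * \<bar>s1 - s2\<bar>"
    by (auto simp: not_le)
  have "\<forall>n::nat. \<exists>p. fst p \<in> {0..1} \<and> \<bar>fst p - snd p\<bar> \<le> 1/2 \<and>
          norm (g (fst p) - g (snd p)) < inverse (real (Suc n)) * \<bar>fst p - snd p\<bar>"
  proof
    fix n :: nat
    have "inverse (real (Suc n)) > 0" by simp
    then obtain s1 s2 where "s1 \<in> {0..1} \<and> \<bar>s1 - s2\<bar> \<le> 1/2 \<and> norm (g s1 - g s2) < inverse (real (Suc n)) * \<bar>s1 - s2\<bar>"
      using H by blast
    then show "\<exists>p. fst p \<in> {0..1} \<and> \<bar>fst p - snd p\<bar> \<le> 1/2 \<and>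
          norm (g (fst p) - g (snd p)) < inverse (real (Suc n)) * \<bar>fst p - snd p\<bar>"
      by (intro exI[of _ "(s1, s2)"]) simp
  qed
  then have "\<exists>X. \<forall>n. fst (X n) \<in> {0..1} \<and> \<bar>fst (X n) - snd (X n)\<bar> \<le> 1/2 \<and>
          norm (g (fst (X n)) - g (snd (X n))) < inverse (real (Suc n)) * \<bar>fst (X n) - snd (X n)\<bar>"
    by (rule choice)
  then obtain X where X0: "\<forall>n. fst (X n) \<in> {0..1} \<and> \<bar>fst (X n) - snd (X n)\<bar> \<le> 1/2 \<and>
          norm (g (fst (X n)) - g (snd (X n))) < inverse (real (Suc n)) * \<bar>fst (X n) - snd (X n)\<bar>"
    by blast
  have X: "\<And>n. fst (X n) \<in> {0..1}" "\<And>n. \<bar>fst (X n) - snd (X n)\<bar> \<le> 1/2"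
    "\<And>n. norm (g (fst (X n)) - g (snd (X n))) < inverse (real (Suc n)) * \<bar>fst (X n) - snd (X n)\<bar>"
    using X0 by blast+
  define P where "P = ({0..1} \<times> {-1..2}) \<inter> {p::real\<times>real. \<bar>fst p - snd p\<bar> \<le> 1/2}"
  have cP: "compact P" unfolding P_def
    by (intro compact_Int_closed compact_Times compact_Icc closed_Collect_le continuous_intros)
  have XP: "X n \<in> P" for n
  proof -
    have "snd (X n) \<in> {-1..2}" using X(1)[of n] X(2)[of n] unfolding atLeastAtMost_iff by arith
    then show ?thesis using X(1)[of n] X(2)[of n] unfolding P_def by (auto simp: mem_Times_iff)
  qed
  have "\<exists>l\<in>P. \<exists>r. strict_mono r \<and> (X \<circ> r) \<longlonglongrightarrow> l"
    using compact_imp_seq_compact[OF cP] XP unfolding seq_compact_def by blast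
  then obtain l r where l: "l \<in> P" "strict_mono r" "(X \<circ> r) \<longlonglongrightarrow> l" by blast
  define a where "a = fst l"
  define b where "b = snd l"
  have ua: "(\<lambda>n. fst (X (r n))) \<longlonglongrightarrow> a" using tendsto_fst[OF l(3)] unfolding a_def by (simp add: o_def)
  have ub: "(\<lambda>n. snd (X (r n))) \<longlonglongrightarrow> b" using tendsto_snd[OF l(3)] unfolding b_def by (simp add: o_def)
  have ab: "\<bar>a - b\<bar> \<le> 1/2" using l(1) unfolding P_def a_def b_def by auto
  have inv0: "(\<lambda>n. inverse (real (Suc (r n)))) \<longlonglongrightarrow> 0"
    using LIMSEQ_subseq_LIMSEQ[OF LIMSEQ_inverse_real_of_nat l(2)] by (simp add: o_def)
  have "g a = g b"
  proof -
    have t1: "(\<lambda>n. norm (g (fst (X (r n))) - g (snd (X (r n))))) \<longlonglongrightarrow> norm (g a - g b)"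
      by (intro tendsto_intros isCont_tendsto_compose[OF g_isCont ua] isCont_tendsto_compose[OF g_isCont ub])
    have t2: "(\<lambda>n. inverse (real (Suc (r n))) * (1/2)) \<longlonglongrightarrow> 0 * (1/2)"
      by (intro tendsto_intros inv0)
    have "norm (g (fst (X (r n))) - g (snd (X (r n)))) \<le> inverse (real (Suc (r n))) * (1/2)" for n
    proof -
      have "inverse (real (Suc (r n))) * \<bar>fst (X (r n)) - snd (X (r n))\<bar> \<le> inverse (real (Suc (r n))) * (1/2)"
        using X(2) by (intro mult_left_mono) auto
      then show ?thesis using X(3)[of "r n"] by linarith
    qed
    then have "norm (g a - g b) \<le> 0 * (1/2)"
      using LIMSEQ_le[OF t1 t2] by blast
    then show ?thesis by simp
  qed
  then have "a = b" using g_inj_close ab by simp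
  define ng where "ng = norm (g' a)"
  have ng: "ng > 0" using g'_nz unfolding ng_def by simp
  have "isCont g' a" using g'_cont[of UNIV] by (simp add: continuous_on_eq_continuous_at)
  then obtain \<eta> where eta: "\<eta> > 0" "\<forall>s. dist s a < \<eta> \<longrightarrow> dist (g' s) (g' a) < ng/2"
    using \<open>isCont g' a\<close>[unfolded continuous_at_eps_delta, rule_format, of "ng/2"] ng by auto
  have loc: "ng/2 * \<bar>s - s'\<bar> \<le> norm (g s - g s')" if "s \<in> ball a \<eta>" "s' \<in> ball a \<eta>" for s s'
  proof -
    have E: "(g s - s *\<^sub>R g' a) - (g s' - s' *\<^sub>R g' a) = (g s - g s') - (s - s') *\<^sub>R g' a"
      by (simp add: algebra_simps)
    have A0: "norm ((g s - s *\<^sub>R g' a) - (g s' - s' *\<^sub>R g' a)) \<le> ng/2 * \<bar>s - s'\<bar>"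
    proof (rule vd_bound[of "ball a \<eta>" "\<lambda>s. g s - s *\<^sub>R g' a" "\<lambda>s. g' s - g' a"])
      show "((\<lambda>s. g s - s *\<^sub>R g' a) has_vector_derivative g' x - g' a) (at x)" for x
      proof -
        have d: "((\<lambda>s. s *\<^sub>R g' a) has_vector_derivative g' a) (at x)"
          using has_vector_derivative_scaleR[OF DERIV_ident has_vector_derivative_const[of "g' a"]]
          by simp
        show ?thesis using has_vector_derivative_diff[OF g_deriv[of x] d] .
      qed
      show "norm (g' x - g' a) \<le> ng/2" if "x \<in> ball a \<eta>" for x
        using eta(2) that by (auto simp: dist_norm dist_commute less_imp_le)
    qed (use that in auto)
    have A: "norm ((g s - g s') - (s - s') *\<^sub>R g' a) \<le> ng/2 * \<bar>s - s'\<bar>" using A0 unfolding E .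
    have N: "norm ((s - s') *\<^sub>R g' a) = \<bar>s - s'\<bar> * ng" unfolding ng_def by simp
    have T: "norm ((s - s') *\<^sub>R g' a) \<le> norm (g s - g s') + norm ((g s - g s') - (s - s') *\<^sub>R g' a)"
      using norm_triangle_ineq4[of "g s - g s'" "(g s - g s') - (s - s') *\<^sub>R g' a"] by simp
    have "\<bar>s - s'\<bar> * ng = ng/2 * \<bar>s - s'\<bar> + ng/2 * \<bar>s - s'\<bar>" by simp
    then show ?thesis using A N T by linarith
  qed
  have e1: "\<forall>\<^sub>F n in sequentially. fst (X (r n)) \<in> ball a \<eta>"
    using topological_tendstoD[OF ua open_ball, of a \<eta>] eta(1) by simp
  have e2: "\<forall>\<^sub>F n in sequentially. snd (X (r n)) \<in> ball a \<eta>"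
    using topological_tendstoD[OF ub open_ball, of a \<eta>] eta(1) \<open>a = b\<close> by simp
  have e3: "\<forall>\<^sub>F n in sequentially. inverse (real (Suc (r n))) < ng/2"
    using order_tendstoD(2)[OF inv0, of "ng/2"] ng by simp
  have "\<forall>\<^sub>F n in sequentially. False"
    using e1 e2 e3
  proof eventually_elim
    case (elim n)
    define u where "u = fst (X (r n))"
    define v where "v = snd (X (r n))"
    have A: "ng/2 * \<bar>u - v\<bar> \<le> norm (g u - g v)" using loc elim unfolding u_def v_def by blast
    have B: "norm (g u - g v) < inverse (real (Suc (r n))) * \<bar>u - v\<bar>" using X(3) unfolding u_def v_def by blast
    have C: "inverse (real (Suc (r n))) * \<bar>u - v\<bar> \<le> ng/2 * \<bar>u - v\<bar>"
      using elim(3) by (intro mult_right_mono) auto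
    show False using A B C by linarith
  qed
  then show False by simp
qed

lemma chord_arc: "\<exists>K>0. \<forall>\<tau>1\<in>\<Gamma>. \<forall>\<tau>2\<in>\<Gamma>. \<exists>J. connected J \<and> J \<subseteq> \<Gamma> \<and> \<tau>1 \<in> J \<and> \<tau>2 \<in> J \<and>
   (\<forall>\<tau>\<in>J. norm (\<tau> - \<tau>2) \<le> K * norm (\<tau>1 - \<tau>2))"
proof -
  obtain c where c: "c > 0" "\<forall>s1 s2. s1 \<in> {0..1} \<longrightarrow> \<bar>s1 - s2\<bar> \<le> 1/2 \<longrightarrow> c * \<bar>s1 - s2\<bar> \<le> norm (g s1 - g s2)"
    using chord_lower by blast
  obtain L where L: "L > 0" "\<forall>s\<in>{-1..2}. \<forall>s'\<in>{-1..2}. norm (g s - g s') \<le> L * \<bar>s - s'\<bar>"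
    using g_lip by blast
  have allG: "g s \<in> \<Gamma>" for s
  proof -
    have "frac s \<in> {0..1}" by (simp add: frac_lt_1 less_imp_le)
    then show ?thesis using g_frac[of s] by (auto simp: path_image_def)
  qed
  show ?thesis
  proof (rule exI[of _ "L / c"], intro conjI ballI)
    show "L / c > 0" using L c by simp
    fix \<tau>1 \<tau>2 assume t1: "\<tau>1 \<in> \<Gamma>" and t2: "\<tau>2 \<in> \<Gamma>"
    obtain s1 where s1: "s1 \<in> {0..1}" "\<tau>1 = g s1" using t1 by (auto simp: path_image_def)
    have "s1 - 1/2 + 1 = s1 + 1/2" by simp
    then have "\<Gamma> = g ` {s1 - 1/2 .. s1 + 1/2}" using g_image[of "s1 - 1/2"] by metis
    then obtain s2 where s2: "s2 \<in> {s1 - 1/2 .. s1 + 1/2}" "\<tau>2 = g s2" using t2 by auto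
    have d12: "\<bar>s1 - s2\<bar> \<le> 1/2" using s2(1) unfolding atLeastAtMost_iff by arith
    define J where "J = g ` {min s1 s2 .. max s1 s2}"
    show "\<exists>J. connected J \<and> J \<subseteq> \<Gamma> \<and> \<tau>1 \<in> J \<and> \<tau>2 \<in> J \<and> (\<forall>\<tau>\<in>J. norm (\<tau> - \<tau>2) \<le> L / c * norm (\<tau>1 - \<tau>2))"
    proof (rule exI[of _ J], intro conjI ballI)
      show "connected J" unfolding J_def
        by (intro connected_continuous_image connected_Icc continuous_at_imp_continuous_on ballI g_isCont)
      show "J \<subseteq> \<Gamma>" unfolding J_def using allG by auto
      show "\<tau>1 \<in> J" "\<tau>2 \<in> J" unfolding J_def using s1 s2 by auto
      fix \<tau> assume "\<tau> \<in> J"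
      then obtain s where s: "s \<in> {min s1 s2 .. max s1 s2}" "\<tau> = g s" unfolding J_def by auto
      have ins: "s \<in> {-1..2}" "s2 \<in> {-1..2}" using s(1) s1(1) s2(1) by auto
      have "norm (\<tau> - \<tau>2) \<le> L * \<bar>s - s2\<bar>" using L(2) ins s(2) s2(2) by blast
      also have "\<dots> \<le> L * \<bar>s1 - s2\<bar>" using s(1) L(1) by (intro mult_left_mono) (auto simp: abs_le_iff)
      also have "\<dots> = L / c * (c * \<bar>s1 - s2\<bar>)" using c(1) by simp
      also have "\<dots> \<le> L / c * norm (\<tau>1 - \<tau>2)"
        using c(2) s1 s2 d12 L(1) c(1) by (intro mult_left_mono) auto
      finally show "norm (\<tau> - \<tau>2) \<le> L / c * norm (\<tau>1 - \<tau>2)" .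
    qed
  qed
qed

end

context setting begin

definition Aq :: "complex \<Rightarrow> real" where "Aq \<tau> = norm (\<tau>^2 - 1)"

lemma Aq_nonneg: "Aq \<tau> \<ge> 0" unfolding Aq_def by simp

lemma Aq_fact: "Aq \<tau> = norm (\<tau> - 1) * norm (\<tau> + 1)"
proof -
  have "\<tau>^2 - 1 = (\<tau> - 1) * (\<tau> + 1)"
    using square_diff_one_factored[of \<tau>] by (simp add: power2_eq_square mult.commute)
  then show ?thesis unfolding Aq_def by (simp add: norm_mult)
qed

lemma norm_wb: assumes "\<tau> \<in> \<Gamma>" shows "norm (wb \<tau>) = sqrt (Aq \<tau>)"
proof -
  have "(norm (wb \<tau>))^2 = Aq \<tau>" using wb_sq[OF assms] unfolding Aq_def by (metis norm_power)
  then show ?thesis by (metis norm_ge_zero real_sqrt_abs abs_of_nonneg)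
qed

lemma Aq_pos: "Aq \<tau> > 0 \<longleftrightarrow> \<tau> \<noteq> 1 \<and> \<tau> \<noteq> -1"
proof -
  have "Aq \<tau> = 0 \<longleftrightarrow> \<tau> = 1 \<or> \<tau> = -1"
    unfolding Aq_fact by (auto simp: add_eq_0_iff minus_equation_iff)
  then show ?thesis using Aq_nonneg[of \<tau>] by linarith
qed

lemma Aq_diff: "\<bar>Aq x - Aq y\<bar> \<le> norm (x^2 - y^2)"
proof -
  have "x^2 - y^2 = (x^2 - 1) - (y^2 - 1)" by simp
  then show ?thesis unfolding Aq_def by (metis norm_triangle_ineq3)
qed

lemma ends_in: "1 \<in> \<Gamma>" "-1 \<in> \<Gamma>"
  using contains Delta_Fr Fr_ends by force+

definition "Cr = (SOME C. \<forall>x\<in>\<Gamma>. \<forall>y\<in>\<Gamma>. norm (\<rho> x - \<rho> y) \<le> C * dist x y powr \<sigma>)"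
definition "Cp = max Cr 0"

lemma Cp_nonneg: "Cp \<ge> 0" unfolding Cp_def by simp

lemma rho_hold: assumes "x \<in> \<Gamma>" "y \<in> \<Gamma>" shows "norm (\<rho> x - \<rho> y) \<le> Cp * dist x y powr \<sigma>"
proof -
  have "\<exists>C. \<forall>x\<in>\<Gamma>. \<forall>y\<in>\<Gamma>. norm (\<rho> x - \<rho> y) \<le> C * dist x y powr \<sigma>"
    using rho_holder unfolding holder_on_def .
  then have "\<forall>x\<in>\<Gamma>. \<forall>y\<in>\<Gamma>. norm (\<rho> x - \<rho> y) \<le> Cr * dist x y powr \<sigma>"
    unfolding Cr_def by (rule someI_ex)
  then have "norm (\<rho> x - \<rho> y) \<le> Cr * dist x y powr \<sigma>" using assms by blast
  also have "\<dots> \<le> Cp * dist x y powr \<sigma>" unfolding Cp_def by (intro mult_right_mono) auto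
  finally show ?thesis .
qed

lemma rho_bound: assumes "\<tau> \<in> \<Gamma>" shows "norm (\<rho> \<tau>) \<le> Cp * Aq \<tau> powr \<sigma>"
proof -
  have s0: "\<sigma> \<ge> 0" using sig by simp
  have b1: "norm (\<rho> \<tau>) \<le> Cp * norm (\<tau> - 1) powr \<sigma>"
    using rho_hold[OF assms ends_in(1)] rho_ends by (simp add: dist_norm)
  have b2: "norm (\<rho> \<tau>) \<le> Cp * norm (\<tau> + 1) powr \<sigma>"
    using rho_hold[OF assms ends_in(2)] rho_ends by (simp add: dist_norm)
  have tri: "norm (\<tau> - 1) + norm (\<tau> + 1) \<ge> 2"
    using norm_triangle_ineq4[of "\<tau> + 1" "\<tau> - 1"] by (simp add: norm_minus_commute)
  show ?thesis
  proof (cases "norm (\<tau> - 1) \<le> norm (\<tau> + 1)")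
    case True
    then have "norm (\<tau> + 1) \<ge> 1" using tri by linarith
    then have "norm (\<tau> - 1) \<le> Aq \<tau>" unfolding Aq_fact
      using mult_left_mono[of 1 "norm (\<tau> + 1)" "norm (\<tau> - 1)"] by simp
    then have "norm (\<tau> - 1) powr \<sigma> \<le> Aq \<tau> powr \<sigma>" using s0 by (intro powr_mono2) auto
    then show ?thesis using b1 Cp_nonneg by (meson mult_left_mono order_trans)
  next
    case False
    then have "norm (\<tau> - 1) \<ge> 1" using tri by linarith
    then have "norm (\<tau> + 1) \<le> Aq \<tau>" unfolding Aq_fact
      using mult_right_mono[of 1 "norm (\<tau> - 1)" "norm (\<tau> + 1)"] by simp
    then have "norm (\<tau> + 1) powr \<sigma> \<le> Aq \<tau> powr \<sigma>" using s0 by (intro powr_mono2) auto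
    then show ?thesis using b2 Cp_nonneg by (meson mult_left_mono order_trans)
  qed
qed

lemma ratio_bound: assumes "\<tau> \<in> \<Gamma>" shows "norm (\<rho> \<tau> / wb \<tau>) \<le> Cp * Aq \<tau> powr (\<sigma> - 1/2)"
proof (cases "Aq \<tau> = 0")
  case True
  then have "wb \<tau> = 0" using norm_wb[OF assms] by simp
  then show ?thesis using True by simp
next
  case False
  then have Ap: "Aq \<tau> > 0" using Aq_nonneg[of \<tau>] by simp
  have "norm (\<rho> \<tau> / wb \<tau>) = norm (\<rho> \<tau>) / sqrt (Aq \<tau>)" using norm_wb[OF assms] by (simp add: norm_divide)
  also have "\<dots> \<le> Cp * Aq \<tau> powr \<sigma> / sqrt (Aq \<tau>)"
    using rho_bound[OF assms] Ap by (simp add: divide_right_mono)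
  also have "\<dots> = Cp * Aq \<tau> powr (\<sigma> - 1/2)"
    using Ap by (simp add: powr_diff powr_half_sqrt)
  finally show ?thesis .
qed

lemma core1: assumes "\<tau>1 \<in> \<Gamma>" "\<tau>2 \<in> \<Gamma>" "Aq \<tau>2 \<le> Aq \<tau>1"
  shows "norm (\<rho> \<tau>1 / wb \<tau>1 - \<rho> \<tau>2 / wb \<tau>2) \<le> 2 * Cp * Aq \<tau>1 powr (\<sigma> - 1/2)"
proof -
  have "Aq \<tau>2 powr (\<sigma> - 1/2) \<le> Aq \<tau>1 powr (\<sigma> - 1/2)"
    using assms(3) sig Aq_nonneg by (intro powr_mono2) auto
  then have "Cp * Aq \<tau>2 powr (\<sigma> - 1/2) \<le> Cp * Aq \<tau>1 powr (\<sigma> - 1/2)"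
    using Cp_nonneg by (rule mult_left_mono)
  then show ?thesis
    using ratio_bound[OF assms(1)] ratio_bound[OF assms(2)]
      norm_triangle_ineq4[of "\<rho> \<tau>1 / wb \<tau>1" "\<rho> \<tau>2 / wb \<tau>2"] by linarith
qed

lemma Gamma_bounded: "\<exists>R\<ge>1. \<forall>\<tau>\<in>\<Gamma>. norm \<tau> \<le> R"
proof -
  obtain R0 where "\<forall>\<tau>\<in>\<Gamma>. norm \<tau> \<le> R0" using compact_Gamma compact_imp_bounded bounded_iff by metis
  then show ?thesis by (intro exI[of _ "max R0 1"]) auto
qed

end

lemma powr_trade:
  fixes A d s :: real
  assumes "0 < d" "d \<le> A" "0 \<le> s" "s \<le> 1"
  shows "A powr s * d \<le> A * d powr s"
proof -
  have A0: "A > 0" using assms by linarith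
  have dd: "d = d powr s * d powr (1 - s)"
    using assms(1) by (simp add: powr_add[symmetric])
  have AA: "A = A powr s * A powr (1 - s)"
    using A0 by (simp add: powr_add[symmetric])
  have m: "d powr (1 - s) \<le> A powr (1 - s)" using assms by (intro powr_mono2) auto
  have "A powr s * d = (A powr s * d powr s) * d powr (1 - s)" by (subst dd) (simp add: mult.assoc)
  also have "\<dots> \<le> (A powr s * d powr s) * A powr (1 - s)" by (rule mult_left_mono[OF m]) simp
  also have "\<dots> = A * d powr s" by (subst (2) AA) (simp add: algebra_simps)
  finally show ?thesis .
qed

context setting begin

lemma sq_diff_bound: assumes "x \<in> \<Gamma>" "y \<in> \<Gamma>" "\<forall>\<tau>\<in>\<Gamma>. norm \<tau> \<le> R"
  shows "norm (x^2 - y^2) \<le> 2 * R * norm (x - y)"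
proof -
  have "x^2 - y^2 = (x - y) * (x + y)" by (simp add: power2_eq_square algebra_simps)
  then have "norm (x^2 - y^2) = norm (x - y) * norm (x + y)" by (simp add: norm_mult)
  also have "\<dots> \<le> norm (x - y) * (2 * R)"
  proof (rule mult_left_mono)
    have "norm x \<le> R" "norm y \<le> R" using assms by auto
    then show "norm (x + y) \<le> 2 * R" using norm_triangle_ineq[of x y] by linarith
  qed simp
  finally show ?thesis by (simp add: algebra_simps)
qed

lemma core2: "\<exists>c0 M. c0 > 0 \<and> c0 \<le> 1 \<and> M \<ge> 0 \<and> (\<forall>\<tau>1\<in>\<Gamma>. \<forall>\<tau>2\<in>\<Gamma>. Aq \<tau>2 \<le> Aq \<tau>1 \<longrightarrow>
    norm (\<tau>1 - \<tau>2) < c0 * Aq \<tau>2 \<longrightarrow>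
    norm (\<rho> \<tau>1 / wb \<tau>1 - \<rho> \<tau>2 / wb \<tau>2) \<le> M * norm (\<tau>1 - \<tau>2) powr \<sigma> / sqrt (Aq \<tau>1))"
proof -
  obtain R where R: "R \<ge> 1" "\<forall>\<tau>\<in>\<Gamma>. norm \<tau> \<le> R" using Gamma_bounded by blast
  obtain K where K: "K > 0" "\<forall>\<tau>1\<in>\<Gamma>. \<forall>\<tau>2\<in>\<Gamma>. \<exists>J. connected J \<and> J \<subseteq> \<Gamma> \<and> \<tau>1 \<in> J \<and> \<tau>2 \<in> J \<and>
     (\<forall>\<tau>\<in>J. norm (\<tau> - \<tau>2) \<le> K * norm (\<tau>1 - \<tau>2))" using chord_arc by blast
  define c0 where "c0 = min 1 (1 / (8 * R * K))"
  define M where "M = Cp * (1 + 2 * R)"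
  have RK: "R * K > 0" using R K by simp
  have KR: "K * R > 0" using R K by simp
  have c0: "c0 > 0" "c0 \<le> 1" "2 * R * K * c0 \<le> 1/4"
  proof -
    show "c0 > 0" "c0 \<le> 1" unfolding c0_def using RK KR by auto
    have "c0 \<le> 1 / (8 * R * K)" unfolding c0_def by simp
    then have "2 * R * K * c0 \<le> 2 * R * K * (1 / (8 * R * K))"
      using RK KR by (intro mult_left_mono) auto
    also have "\<dots> = 1/4"
    proof -
      have "R \<noteq> 0" "K \<noteq> 0" using R(1) K(1) by auto
      then show ?thesis by (simp add: field_simps)
    qed
    finally show "2 * R * K * c0 \<le> 1/4" .
  qed
  have M: "M \<ge> 0" unfolding M_def using Cp_nonneg R by simp
  show ?thesis
  proof (intro exI conjI ballI impI)
    fix \<tau>1 \<tau>2 assume t1: "\<tau>1 \<in> \<Gamma>" and t2: "\<tau>2 \<in> \<Gamma>" and A21: "Aq \<tau>2 \<le> Aq \<tau>1"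
      and dsm: "norm (\<tau>1 - \<tau>2) < c0 * Aq \<tau>2"
    define d where "d = norm (\<tau>1 - \<tau>2)"
    define A1 where "A1 = Aq \<tau>1"
    define A2 where "A2 = Aq \<tau>2"
    have A2p: "A2 > 0" using dsm c0 unfolding A2_def
      by (metis norm_ge_zero order_le_less_trans zero_less_mult_pos Aq_nonneg le_less)
    have A1p: "A1 > 0" using A21 A2p unfolding A1_def A2_def by linarith
    define a1 where "a1 = sqrt A1"
    define a2 where "a2 = sqrt A2"
    have a2p: "a2 > 0" "a2 * a2 = A2" unfolding a2_def using A2p by auto
    have a1p: "a1 > 0" "a1 \<ge> a2" unfolding a1_def a2_def using A1p A21 unfolding A1_def A2_def by auto
    have nw1: "norm (wb \<tau>1) = a1" using norm_wb[OF t1] unfolding a1_def A1_def .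
    have nw2: "norm (wb \<tau>2) = a2" using norm_wb[OF t2] unfolding a2_def A2_def .
    have dA: "d < c0 * A2" using dsm unfolding d_def A2_def .
    show "norm (\<rho> \<tau>1 / wb \<tau>1 - \<rho> \<tau>2 / wb \<tau>2) \<le> M * norm (\<tau>1 - \<tau>2) powr \<sigma> / sqrt (Aq \<tau>1)"
    proof (cases "d = 0")
      case True
      then have "\<tau>1 = \<tau>2" unfolding d_def by simp
      then show ?thesis by simp
    next
      case False
      then have dp: "d > 0" unfolding d_def by simp
      obtain J where J: "connected J" "J \<subseteq> \<Gamma>" "\<tau>1 \<in> J" "\<tau>2 \<in> J" "\<forall>\<tau>\<in>J. norm (\<tau> - \<tau>2) \<le> K * d"
        using K(2) t1 t2 unfolding d_def by blast
      have closeJ: "norm (\<tau>^2 - \<tau>2^2) \<le> A2 / 4" if "\<tau> \<in> J" for \<tau>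
      proof -
        have "norm (\<tau>^2 - \<tau>2^2) \<le> 2 * R * norm (\<tau> - \<tau>2)" using sq_diff_bound J(2) that t2 R(2) by blast
        also have "\<dots> \<le> 2 * R * (K * d)" using J(5) that R(1) by (intro mult_left_mono) auto
        also have "\<dots> \<le> 2 * R * (K * (c0 * A2))" using dA R(1) K(1) by (intro mult_left_mono) auto
        also have "\<dots> = (2 * R * K * c0) * A2" by (simp add: algebra_simps)
        also have "\<dots> \<le> (1/4) * A2" using c0(3) A2p by (intro mult_right_mono) auto
        finally show ?thesis by simp
      qed
      have Jne: "\<tau> \<in> \<Gamma> - {1, -1}" if "\<tau> \<in> J" for \<tau>
      proof -
        have "\<bar>Aq \<tau> - Aq \<tau>2\<bar> \<le> A2 / 4" using Aq_diff[of \<tau> \<tau>2] closeJ[OF that] by linarith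
        then have "Aq \<tau> > 0" using A2p unfolding A2_def by linarith
        then show ?thesis using Aq_pos J(2) that by auto
      qed
      define b where "b = wb \<tau>2"
      have cJ: "continuous_on J wb" using wb_cont continuous_on_subset Jne by blast
      have cS: "connected (wb ` J)" using connected_continuous_image[OF cJ J(1)] .
      have cover: "wb ` J \<subseteq> ball b a2 \<union> ball (-b) a2"
      proof
        fix x assume "x \<in> wb ` J"
        then obtain \<tau> where \<tau>: "\<tau> \<in> J" "x = wb \<tau>" by auto
        have "x^2 - b^2 = \<tau>^2 - \<tau>2^2" using wb_sq J(2) \<tau> t2 unfolding b_def by auto
        moreover have "x^2 - b^2 = (x - b) * (x + b)" by (simp add: power2_eq_square algebra_simps)
        ultimately have "(x - b) * (x + b) = \<tau>^2 - \<tau>2^2" by simp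
        then have "norm ((x - b) * (x + b)) = norm (\<tau>^2 - \<tau>2^2)" by simp
        then have "norm (x - b) * norm (x + b) = norm (\<tau>^2 - \<tau>2^2)" by (simp only: norm_mult)
        then have "norm (x - b) * norm (x + b) \<le> A2 / 4" using closeJ[OF \<tau>(1)] by simp
        then have "\<not> (norm (x - b) \<ge> a2 \<and> norm (x + b) \<ge> a2)"
        proof (intro notI)
          assume h: "norm (x - b) \<ge> a2 \<and> norm (x + b) \<ge> a2"
          then have "a2 * a2 \<le> norm (x - b) * norm (x + b)" using a2p by (intro mult_mono) auto
          then show False using \<open>norm (x - b) * norm (x + b) \<le> A2 / 4\<close> a2p A2p by linarith
        qed
        then show "x \<in> ball b a2 \<union> ball (-b) a2"
          by (auto simp: dist_norm norm_minus_commute not_le simp del: diff_minus_eq_add)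
            (metis add.commute diff_minus_eq_add minus_diff_eq norm_minus_cancel)
      qed
      have disj: "ball b a2 \<inter> ball (-b) a2 \<inter> wb ` J = {}"
      proof -
        have "\<not> (dist b z < a2 \<and> dist (-b) z < a2)" for z
        proof
          assume h: "dist b z < a2 \<and> dist (-b) z < a2"
          have "2 * b = (z + b) - (z - b)" by simp
          then have "norm (2 * b) \<le> norm (z + b) + norm (z - b)" by (metis norm_triangle_ineq4)
          moreover have "norm (z + b) = dist (-b) z" by (simp add: dist_norm norm_minus_commute)
          moreover have "norm (z - b) = dist b z" by (simp add: dist_norm norm_minus_commute)
          moreover have "norm (2 * b) = 2 * a2" using nw2 unfolding b_def by (simp add: norm_mult)
          ultimately show False using h by linarith
        qed
        then show ?thesis by auto
      qed
      have "ball b a2 \<inter> wb ` J = {} \<or> ball (-b) a2 \<inter> wb ` J = {}"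
        using connectedD[OF cS open_ball open_ball disj cover] .
      moreover have "b \<in> ball b a2 \<inter> wb ` J" using a2p J(4) unfolding b_def by auto
      ultimately have "ball (-b) a2 \<inter> wb ` J = {}" by blast
      then have "wb \<tau>1 \<in> ball b a2" using cover J(3) by blast
      then have n1: "norm (wb \<tau>1 - b) < a2" by (simp add: dist_norm norm_minus_commute)
      have n2: "norm (wb \<tau>1 + b) > a2"
      proof -
        have "2 * b = (wb \<tau>1 + b) - (wb \<tau>1 - b)" by simp
        then have "norm (2 * b) \<le> norm (wb \<tau>1 + b) + norm (wb \<tau>1 - b)" by (metis norm_triangle_ineq4)
        moreover have "norm (2 * b) = 2 * a2" using nw2 unfolding b_def by (simp add: norm_mult)
        ultimately show ?thesis using n1 by linarith
      qed
      have "norm (wb \<tau>1 - b) * norm (wb \<tau>1 + b) = norm (\<tau>1^2 - \<tau>2^2)"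
      proof -
        have "(wb \<tau>1 - b) * (wb \<tau>1 + b) = (wb \<tau>1)^2 - b^2" by (simp add: power2_eq_square algebra_simps)
        also have "\<dots> = \<tau>1^2 - \<tau>2^2" using wb_sq t1 t2 unfolding b_def by simp
        finally show ?thesis by (metis norm_mult)
      qed
      also have "\<dots> \<le> 2 * R * d" using sq_diff_bound[OF t1 t2 R(2)] unfolding d_def .
      finally have "norm (wb \<tau>1 - b) * norm (wb \<tau>1 + b) \<le> 2 * R * d" .
      moreover have "norm (wb \<tau>1 - b) * a2 \<le> norm (wb \<tau>1 - b) * norm (wb \<tau>1 + b)"
        using n2 by (intro mult_left_mono) auto
      ultimately have "norm (wb \<tau>1 - b) * a2 \<le> 2 * R * d" by linarith
      then have wdiff: "norm (b - wb \<tau>1) \<le> 2 * R * d / a2"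
        using a2p by (simp add: pos_le_divide_eq norm_minus_commute)
      have w1nz: "wb \<tau>1 \<noteq> 0" using nw1 a1p by auto
      have w2nz: "b \<noteq> 0" using nw2 a2p unfolding b_def by auto
      have split: "\<rho> \<tau>1 / wb \<tau>1 - \<rho> \<tau>2 / b = (\<rho> \<tau>1 - \<rho> \<tau>2) / wb \<tau>1 + \<rho> \<tau>2 * (b - wb \<tau>1) / (wb \<tau>1 * b)"
        using w1nz w2nz by (simp add: field_simps)
      have t1b: "norm ((\<rho> \<tau>1 - \<rho> \<tau>2) / wb \<tau>1) \<le> Cp * d powr \<sigma> / a1"
      proof -
        have "norm (\<rho> \<tau>1 - \<rho> \<tau>2) \<le> Cp * d powr \<sigma>" using rho_hold[OF t1 t2] unfolding d_def by (simp add: dist_norm)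
        then show ?thesis using nw1 a1p by (simp add: norm_divide divide_right_mono)
      qed
      have t2b: "norm (\<rho> \<tau>2 * (b - wb \<tau>1) / (wb \<tau>1 * b)) \<le> 2 * R * Cp * d powr \<sigma> / a1"
      proof -
        have r2: "norm (\<rho> \<tau>2) \<le> Cp * A2 powr \<sigma>" using rho_bound[OF t2] unfolding A2_def .
        have "norm (\<rho> \<tau>2 * (b - wb \<tau>1) / (wb \<tau>1 * b)) = norm (\<rho> \<tau>2) * norm (b - wb \<tau>1) / (a1 * a2)"
          using nw1 nw2 unfolding b_def by (simp add: norm_divide norm_mult)
        also have "\<dots> \<le> (Cp * A2 powr \<sigma>) * (2 * R * d / a2) / (a1 * a2)"
          using r2 wdiff a1p a2p Cp_nonneg
          by (intro divide_right_mono mult_mono) auto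
        also have "\<dots> = 2 * R * Cp * (A2 powr \<sigma> * d) / (a1 * (a2 * a2))"
          using a2p by (simp add: field_simps)
        also have "\<dots> \<le> 2 * R * Cp * (A2 * d powr \<sigma>) / (a1 * (a2 * a2))"
        proof -
          have "c0 * A2 \<le> 1 * A2" using c0(2) A2p by (intro mult_right_mono) auto
          then have "d \<le> A2" using dA by linarith
          then have "A2 powr \<sigma> * d \<le> A2 * d powr \<sigma>"
            using powr_trade[of d A2 \<sigma>] dp sig by auto
          then show ?thesis using R(1) Cp_nonneg a1p a2p
            by (intro divide_right_mono mult_left_mono) auto
        qed
        also have "\<dots> = 2 * R * Cp * d powr \<sigma> / a1" using a2p A2p by (simp add: field_simps)
        finally show ?thesis .
      qed
      have eqn: "norm (\<rho> \<tau>1 / wb \<tau>1 - \<rho> \<tau>2 / wb \<tau>2) = norm ((\<rho> \<tau>1 - \<rho> \<tau>2) / wb \<tau>1 + \<rho> \<tau>2 * (b - wb \<tau>1) / (wb \<tau>1 * b))"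
        using split unfolding b_def by simp
      have "norm (\<rho> \<tau>1 / wb \<tau>1 - \<rho> \<tau>2 / wb \<tau>2) \<le> Cp * d powr \<sigma> / a1 + 2 * R * Cp * d powr \<sigma> / a1"
        unfolding eqn using t1b t2b norm_triangle_ineq[of "(\<rho> \<tau>1 - \<rho> \<tau>2) / wb \<tau>1" "\<rho> \<tau>2 * (b - wb \<tau>1) / (wb \<tau>1 * b)"]
        by linarith
      also have "\<dots> = M * d powr \<sigma> / a1" unfolding M_def using a1p(1) by (simp add: field_simps)
      finally show ?thesis unfolding d_def a1_def A1_def .
    qed
  qed (use c0 M in auto)
qed

end

context setting begin

lemma final_claims:
  "holder_on (\<sigma> - 1/2) \<Gamma> (\<lambda>\<tau>. \<rho> \<tau> / wb \<tau>) \<and>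
   (\<exists>C2. \<forall>\<tau>1\<in>\<Gamma> - {1, -1}. \<forall>\<tau>2\<in>\<Gamma> - {1, -1}. \<tau>1 \<noteq> \<tau>2 \<longrightarrow>
      norm (\<rho> \<tau>1 / wb \<tau>1 - \<rho> \<tau>2 / wb \<tau>2)
        \<le> C2 * min (1 / sqrt (norm (1 - \<tau>1\<^sup>2))) (1 / sqrt (norm (1 - \<tau>2\<^sup>2)))
             * norm (\<tau>1 - \<tau>2) powr \<sigma>)"
proof -
  obtain R where R: "R \<ge> 1" "\<forall>\<tau>\<in>\<Gamma>. norm \<tau> \<le> R" using Gamma_bounded by blast
  obtain c0 M where cM: "c0 > 0" "c0 \<le> 1" "M \<ge> 0" "\<forall>\<tau>1\<in>\<Gamma>. \<forall>\<tau>2\<in>\<Gamma>. Aq \<tau>2 \<le> Aq \<tau>1 \<longrightarrow>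
    norm (\<tau>1 - \<tau>2) < c0 * Aq \<tau>2 \<longrightarrow>
    norm (\<rho> \<tau>1 / wb \<tau>1 - \<rho> \<tau>2 / wb \<tau>2) \<le> M * norm (\<tau>1 - \<tau>2) powr \<sigma> / sqrt (Aq \<tau>1)"
    using core2 by blast
  define K1 where "K1 = 1 / c0 + 2 * R"
  have K1p: "K1 > 0" unfolding K1_def using cM R by (simp add: add_pos_pos)
  have s0: "\<sigma> > 0" "\<sigma> - 1/2 > 0" using sig by auto
  have far: "Aq \<tau>1 \<le> K1 * norm (\<tau>1 - \<tau>2)"
    if t: "\<tau>1 \<in> \<Gamma>" "\<tau>2 \<in> \<Gamma>" and fd: "c0 * Aq \<tau>2 \<le> norm (\<tau>1 - \<tau>2)" for \<tau>1 \<tau>2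
  proof -
    have "Aq \<tau>1 - Aq \<tau>2 \<le> 2 * R * norm (\<tau>1 - \<tau>2)"
      using Aq_diff[of \<tau>1 \<tau>2] sq_diff_bound[OF t R(2)] by linarith
    moreover have "Aq \<tau>2 \<le> norm (\<tau>1 - \<tau>2) / c0" using fd cM(1) by (simp add: pos_le_divide_eq mult.commute)
    ultimately have "Aq \<tau>1 \<le> norm (\<tau>1 - \<tau>2) / c0 + 2 * R * norm (\<tau>1 - \<tau>2)" by linarith
    also have "\<dots> = K1 * norm (\<tau>1 - \<tau>2)" unfolding K1_def by (simp add: algebra_simps)
    finally show ?thesis .
  qed
  define C2 where "C2 = 2 * Cp * K1 powr \<sigma> + M"
  have ord2: "norm (\<rho> \<tau>1 / wb \<tau>1 - \<rho> \<tau>2 / wb \<tau>2) \<le> C2 * (1 / sqrt (Aq \<tau>1)) * norm (\<tau>1 - \<tau>2) powr \<sigma>"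
    if t: "\<tau>1 \<in> \<Gamma>" "\<tau>2 \<in> \<Gamma>" and ne: "\<tau>2 \<noteq> 1" "\<tau>2 \<noteq> -1" and A: "Aq \<tau>2 \<le> Aq \<tau>1" for \<tau>1 \<tau>2
  proof -
    define d where "d = norm (\<tau>1 - \<tau>2)"
    have A2p: "Aq \<tau>2 > 0" using Aq_pos ne by blast
    have A1p: "Aq \<tau>1 > 0" using A2p A by linarith
    have sA: "sqrt (Aq \<tau>1) > 0" using A1p by simp
    have X: "d powr \<sigma> / sqrt (Aq \<tau>1) \<ge> 0" using sA by simp
    have eqC: "C2 * (1 / sqrt (Aq \<tau>1)) * d powr \<sigma> = C2 * (d powr \<sigma> / sqrt (Aq \<tau>1))" by simp
    have main: "norm (\<rho> \<tau>1 / wb \<tau>1 - \<rho> \<tau>2 / wb \<tau>2) \<le> C2 * (d powr \<sigma> / sqrt (Aq \<tau>1))"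
    proof (cases "d < c0 * Aq \<tau>2")
      case True
      then have "norm (\<rho> \<tau>1 / wb \<tau>1 - \<rho> \<tau>2 / wb \<tau>2) \<le> M * d powr \<sigma> / sqrt (Aq \<tau>1)"
        using cM(4) t A unfolding d_def by blast
      also have "\<dots> = M * (d powr \<sigma> / sqrt (Aq \<tau>1))" by simp
      also have "\<dots> \<le> C2 * (d powr \<sigma> / sqrt (Aq \<tau>1))"
        using X Cp_nonneg unfolding C2_def by (intro mult_right_mono) auto
      finally show ?thesis .
    next
      case False
      then have "Aq \<tau>1 \<le> K1 * d" using far[OF t] unfolding d_def by simp
      then have "Aq \<tau>1 powr \<sigma> \<le> (K1 * d) powr \<sigma>" using s0 Aq_nonneg by (intro powr_mono2) auto
      also have "\<dots> = K1 powr \<sigma> * d powr \<sigma>" using K1p unfolding d_def by (simp add: powr_mult)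
      finally have pw: "Aq \<tau>1 powr \<sigma> \<le> K1 powr \<sigma> * d powr \<sigma>" .
      have "norm (\<rho> \<tau>1 / wb \<tau>1 - \<rho> \<tau>2 / wb \<tau>2) \<le> 2 * Cp * Aq \<tau>1 powr (\<sigma> - 1/2)"
        using core1[OF t A] .
      also have "\<dots> = 2 * Cp * (Aq \<tau>1 powr \<sigma> / sqrt (Aq \<tau>1))"
        using A1p by (simp add: powr_diff powr_half_sqrt)
      also have "\<dots> \<le> 2 * Cp * (K1 powr \<sigma> * d powr \<sigma> / sqrt (Aq \<tau>1))"
        using pw sA Cp_nonneg by (intro mult_left_mono divide_right_mono) auto
      also have "\<dots> = (2 * Cp * K1 powr \<sigma>) * (d powr \<sigma> / sqrt (Aq \<tau>1))" by simp
      also have "\<dots> \<le> C2 * (d powr \<sigma> / sqrt (Aq \<tau>1))"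
        using X cM(3) unfolding C2_def by (intro mult_right_mono) auto
      finally show ?thesis .
    qed
    then show ?thesis using eqC unfolding d_def by simp
  qed
  define C1 where "C1 = 2 * Cp * K1 powr (\<sigma> - 1/2) + M"
  have ord1: "norm (\<rho> \<tau>1 / wb \<tau>1 - \<rho> \<tau>2 / wb \<tau>2) \<le> C1 * norm (\<tau>1 - \<tau>2) powr (\<sigma> - 1/2)"
    if t: "\<tau>1 \<in> \<Gamma>" "\<tau>2 \<in> \<Gamma>" and A: "Aq \<tau>2 \<le> Aq \<tau>1" for \<tau>1 \<tau>2
  proof -
    define d where "d = norm (\<tau>1 - \<tau>2)"
    have main: "norm (\<rho> \<tau>1 / wb \<tau>1 - \<rho> \<tau>2 / wb \<tau>2) \<le> C1 * d powr (\<sigma> - 1/2)"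
    proof (cases "d = 0")
      case True
      then show ?thesis unfolding d_def by simp
    next
      case False
      then have dp: "d > 0" unfolding d_def by simp
      have Y: "d powr (\<sigma> - 1/2) \<ge> 0" by simp
      show ?thesis
      proof (cases "d < c0 * Aq \<tau>2")
        case True
        have "c0 * Aq \<tau>2 \<le> 1 * Aq \<tau>2" using cM(2) Aq_nonneg by (intro mult_right_mono) auto
        then have dA1: "d \<le> Aq \<tau>1" using True A by linarith
        have sA: "sqrt d \<le> sqrt (Aq \<tau>1)" using dA1 by simp
        have sd: "sqrt d > 0" using dp by simp
        have "norm (\<rho> \<tau>1 / wb \<tau>1 - \<rho> \<tau>2 / wb \<tau>2) \<le> M * d powr \<sigma> / sqrt (Aq \<tau>1)"
          using cM(4) t A True unfolding d_def by blast
        also have "\<dots> \<le> M * d powr \<sigma> / sqrt d"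
          using sA sd cM(3) by (intro divide_left_mono mult_nonneg_nonneg) auto
        also have "\<dots> = M * d powr (\<sigma> - 1/2)" using dp by (simp add: powr_diff powr_half_sqrt)
        also have "\<dots> \<le> C1 * d powr (\<sigma> - 1/2)"
          using Y Cp_nonneg unfolding C1_def by (intro mult_right_mono) auto
        finally show ?thesis .
      next
        case False
        then have "Aq \<tau>1 \<le> K1 * d" using far[OF t] unfolding d_def by simp
        then have "Aq \<tau>1 powr (\<sigma> - 1/2) \<le> (K1 * d) powr (\<sigma> - 1/2)"
          using s0 Aq_nonneg by (intro powr_mono2) auto
        also have "\<dots> = K1 powr (\<sigma> - 1/2) * d powr (\<sigma> - 1/2)" using K1p dp by (simp add: powr_mult)
        finally have pw: "Aq \<tau>1 powr (\<sigma> - 1/2) \<le> K1 powr (\<sigma> - 1/2) * d powr (\<sigma> - 1/2)" .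
        have "norm (\<rho> \<tau>1 / wb \<tau>1 - \<rho> \<tau>2 / wb \<tau>2) \<le> 2 * Cp * Aq \<tau>1 powr (\<sigma> - 1/2)"
          using core1[OF t A] .
        also have "\<dots> \<le> 2 * Cp * (K1 powr (\<sigma> - 1/2) * d powr (\<sigma> - 1/2))"
          using pw Cp_nonneg by (intro mult_left_mono) auto
        also have "\<dots> = (2 * Cp * K1 powr (\<sigma> - 1/2)) * d powr (\<sigma> - 1/2)" by simp
        also have "\<dots> \<le> C1 * d powr (\<sigma> - 1/2)"
          using Y cM(3) unfolding C1_def by (intro mult_right_mono) auto
        finally show ?thesis .
      qed
    qed
    then show ?thesis unfolding d_def .
  qed
  have claim1: "holder_on (\<sigma> - 1/2) \<Gamma> (\<lambda>\<tau>. \<rho> \<tau> / wb \<tau>)"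
    unfolding holder_on_def
  proof (intro exI ballI)
    fix x y assume x: "x \<in> \<Gamma>" and y: "y \<in> \<Gamma>"
    show "norm (\<rho> x / wb x - \<rho> y / wb y) \<le> C1 * dist x y powr (\<sigma> - 1/2)"
    proof (cases "Aq y \<le> Aq x")
      case True
      then show ?thesis using ord1[OF x y] by (simp add: dist_norm)
    next
      case False
      then have "norm (\<rho> y / wb y - \<rho> x / wb x) \<le> C1 * norm (y - x) powr (\<sigma> - 1/2)"
        using ord1[OF y x] by simp
      then show ?thesis by (simp add: dist_norm norm_minus_commute)
    qed
  qed
  have claim2: "\<forall>\<tau>1\<in>\<Gamma> - {1, -1}. \<forall>\<tau>2\<in>\<Gamma> - {1, -1}. \<tau>1 \<noteq> \<tau>2 \<longrightarrow>
      norm (\<rho> \<tau>1 / wb \<tau>1 - \<rho> \<tau>2 / wb \<tau>2)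
        \<le> C2 * min (1 / sqrt (norm (1 - \<tau>1\<^sup>2))) (1 / sqrt (norm (1 - \<tau>2\<^sup>2)))
             * norm (\<tau>1 - \<tau>2) powr \<sigma>"
  proof (intro ballI impI)
    fix \<tau>1 \<tau>2 assume t1: "\<tau>1 \<in> \<Gamma> - {1, -1}" and t2: "\<tau>2 \<in> \<Gamma> - {1, -1}" and "\<tau>1 \<noteq> \<tau>2"
    have n1: "norm (1 - \<tau>1\<^sup>2) = Aq \<tau>1" unfolding Aq_def by (simp add: norm_minus_commute)
    have n2: "norm (1 - \<tau>2\<^sup>2) = Aq \<tau>2" unfolding Aq_def by (simp add: norm_minus_commute)
    have p1: "Aq \<tau>1 > 0" using t1 Aq_pos by blast
    have p2: "Aq \<tau>2 > 0" using t2 Aq_pos by blast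
    show "norm (\<rho> \<tau>1 / wb \<tau>1 - \<rho> \<tau>2 / wb \<tau>2)
        \<le> C2 * min (1 / sqrt (norm (1 - \<tau>1\<^sup>2))) (1 / sqrt (norm (1 - \<tau>2\<^sup>2))) * norm (\<tau>1 - \<tau>2) powr \<sigma>"
    proof (cases "Aq \<tau>2 \<le> Aq \<tau>1")
      case True
      have "1 / sqrt (Aq \<tau>1) \<le> 1 / sqrt (Aq \<tau>2)" using True p2 by (simp add: frac_le)
      then have mn: "min (1 / sqrt (Aq \<tau>1)) (1 / sqrt (Aq \<tau>2)) = 1 / sqrt (Aq \<tau>1)" by simp
      show ?thesis unfolding n1 n2 mn using ord2[of \<tau>1 \<tau>2] t1 t2 True by auto
    next
      case False
      then have le: "Aq \<tau>1 \<le> Aq \<tau>2" by simp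
      have "1 / sqrt (Aq \<tau>2) \<le> 1 / sqrt (Aq \<tau>1)" using le p1 by (simp add: frac_le)
      then have mn: "min (1 / sqrt (Aq \<tau>1)) (1 / sqrt (Aq \<tau>2)) = 1 / sqrt (Aq \<tau>2)" by simp
      have "norm (\<rho> \<tau>2 / wb \<tau>2 - \<rho> \<tau>1 / wb \<tau>1) \<le> C2 * (1 / sqrt (Aq \<tau>2)) * norm (\<tau>2 - \<tau>1) powr \<sigma>"
        using ord2[of \<tau>2 \<tau>1] t1 t2 le by auto
      then show ?thesis unfolding n1 n2 mn by (simp add: norm_minus_commute)
    qed
  qed
  show ?thesis using claim1 claim2 by blast
qed

end

theorem lemma2:
  fixes F :: "complex \<Rightarrow> complex" and g :: "real \<Rightarrow> complex"
    and w wb \<rho> :: "complex \<Rightarrow> complex" and \<sigma> :: real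
  assumes arc: "analytic_arc F"
    and arc_ends: "F 0 = -1" "F 1 = 1"
    and curve: "smooth_jordan_param g"
    and contains: "arc_image F \<subseteq> path_image g"
    and left: "\<forall>t\<in>{0<..<1}. \<forall>\<^sub>F e in at_right (0::real).
                 F (complex_of_real t) + complex_of_real e * \<i> * deriv F (complex_of_real t)
                   \<in> inside (path_image g)"
    and w_hol: "w holomorphic_on (- arc_image F)"
    and w_sq: "\<forall>z\<in>- arc_image F. (w z)\<^sup>2 = z\<^sup>2 - 1"
    and w_inf: "((\<lambda>z. w z / z) \<longlongrightarrow> 1) at_infinity"
    and wb: "\<forall>\<tau>\<in>path_image g. (w \<longlongrightarrow> wb \<tau>) (at \<tau> within inside (path_image g))"
    and sig: "1/2 < \<sigma>" "\<sigma> < 1"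
    and rho_holder: "holder_on \<sigma> (path_image g) \<rho>"
    and rho_ends: "\<rho> 1 = 0" "\<rho> (-1) = 0"
  shows "holder_on (\<sigma> - 1/2) (path_image g) (\<lambda>\<tau>. \<rho> \<tau> / wb \<tau>) \<and>
         (\<exists>C2. \<forall>\<tau>1\<in>path_image g - {1, -1}. \<forall>\<tau>2\<in>path_image g - {1, -1}. \<tau>1 \<noteq> \<tau>2 \<longrightarrow>
            norm (\<rho> \<tau>1 / wb \<tau>1 - \<rho> \<tau>2 / wb \<tau>2)
              \<le> C2 * min (1 / sqrt (norm (1 - \<tau>1\<^sup>2))) (1 / sqrt (norm (1 - \<tau>2\<^sup>2)))
                   * norm (\<tau>1 - \<tau>2) powr \<sigma>)"
proof -
  interpret setting F g w wb \<rho> \<sigma>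
    using assms by (unfold_locales) auto
  show ?thesis by (rule final_claims)
qed

end
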